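(* Let $p\in(0,1)$, let $X,\gamma$ satisfy the standing assumptions in the context, let $0\le x_0<\mathbb E[\gamma X]$, let $q=\inf\{\mathrm{VaR}_p(g(X)):g\in\mathcal G_{\rm ns}\}$, and let $g_X\in\mathcal G_{\rm ns}$ be a solution of the problem of minimizing $\mathrm{VaR}_p(g(X))$ over $g\in\mathcal G_{\rm ns}$. Assume $q>0$. Then: (i) $\mathbb E[\gamma g_X(X)]=x_0$; (ii) if $g\in\mathcal G_{\rm ns}$ has the form $g(X)=X\mathds 1_A+(X\wedge q)\mathds 1_{A^c}$ for some $A\in\mathcal F$ with $\mathbb P(A)=1-p$, then $g$ is a solution of the problem; (iii) $g_X(X)=X\mathds 1_A+(X\wedge q)\mathds 1_{A^c}$ a.s. for some $A\in\sigma(X)$ with $\mathbb P(A)=1-p$; (iv) the solutions of the problem of maximizing $\mathbb E[\gamma(X\mathds 1_A+(X\wedge q)\mathds 1_{A^c})]$ over $A\in\sigma(X)$ with $\mathbb P(A)=1-p$ are $A^*=\{U>p\}$ a.s., where $U$ is a uniform transform of $(X-q)\gamma$ on the probability space $(\Omega,\sigma(X),\mathbb P)$; (v) $g_X(X)=X\mathds 1_{A^*}+(X\wedge q)\mathds 1_{(A^* )^c}$ for some $A^*$ as in (iv).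
   Context: $(\Omega,\mathcal F,\mathbb P)$ is atomless. $\mathrm{VaR}_p(Y)=\inf\{x:\mathbb P(Y\le x)\ge p\}$. A uniform transform of a random variable $Y$ is a random variable $U$ uniform on $[0,1]$ with $F_Y^{-1}(U)=Y$ a.s., where $F_Y^{-1}(t)=\mathrm{VaR}_t(Y)$. Standing assumptions: $X\ge0$ is a random variable whose distribution has a positive density on its support; $\gamma:\mathbb R\to\mathbb R$ is continuous and strictly positive; $\gamma$ also denotes $\gamma(X)$; $\mathbb E[\gamma]=1$, $\mathbb E[\gamma X]<\infty$. With $\mathcal G_1$ the measurable functions $\mathbb R\to\mathbb R$, $\mathcal G_{\rm ns}=\{g\in\mathcal G_1:\mathbb E[\gamma g(X)]\ge x_0,\ 0\le g(X)\le X\}$. *)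

theory Defs
  imports "HOL-Probability.Probability"
begin

definition atomless :: "'a measure \<Rightarrow> bool" where
  "atomless M \<longleftrightarrow> (\<forall>A\<in>sets M. 0 < measure M A \<longrightarrow>
      (\<exists>B\<in>sets M. B \<subseteq> A \<and> 0 < measure M B \<and> measure M B < measure M A))"

definition VaR :: "'a measure \<Rightarrow> real \<Rightarrow> ('a \<Rightarrow> real) \<Rightarrow> real" where
  "VaR M p Y = Inf {x. measure M {\<omega>\<in>space M. Y \<omega> \<le> x} \<ge> p}"

text \<open>Uniform transform of Y: U uniform on [0,1] with F_Y^{-1}(U) = Y a.s.,
  where F_Y^{-1}(t) = VaR_t(Y).\<close>
definition uniform_transform :: "'a measure \<Rightarrow> ('a \<Rightarrow> real) \<Rightarrow> ('a \<Rightarrow> real) \<Rightarrow> bool" where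
  "uniform_transform M Y U \<longleftrightarrow> U \<in> borel_measurable M \<and>
     distr M lborel U = uniform_measure lborel {0..1} \<and>
     (AE \<omega> in M. VaR M (U \<omega>) Y = Y \<omega>)"

definition dist_support :: "'a measure \<Rightarrow> ('a \<Rightarrow> real) \<Rightarrow> real set" where
  "dist_support M X = {x. \<forall>e>0. 0 < measure M {\<omega>\<in>space M. X \<omega> \<in> ball x e}}"

definition Gns :: "'a measure \<Rightarrow> ('a \<Rightarrow> real) \<Rightarrow> (real \<Rightarrow> real) \<Rightarrow> real \<Rightarrow> (real \<Rightarrow> real) set" where
  "Gns M X \<gamma> x0 = {g. g \<in> borel_measurable borel \<and>
      integral\<^sup>L M (\<lambda>\<omega>. \<gamma> (X \<omega>) * g (X \<omega>)) \<ge> x0 \<and>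
      (AE \<omega> in M. 0 \<le> g (X \<omega>) \<and> g (X \<omega>) \<le> X \<omega>)}"

definition sigmaX :: "'a measure \<Rightarrow> ('a \<Rightarrow> real) \<Rightarrow> 'a measure" where
  "sigmaX M X = vimage_algebra (space M) X borel"

definition restrX :: "'a measure \<Rightarrow> ('a \<Rightarrow> real) \<Rightarrow> 'a measure" where
  "restrX M X = restr_to_subalg M (sigmaX M X)"

definition objA :: "'a measure \<Rightarrow> ('a \<Rightarrow> real) \<Rightarrow> (real \<Rightarrow> real) \<Rightarrow> real \<Rightarrow> 'a set \<Rightarrow> real" where
  "objA M X \<gamma> q A = integral\<^sup>L M (\<lambda>\<omega>. \<gamma> (X \<omega>) * (if \<omega> \<in> A then X \<omega> else min (X \<omega>) q))"

end

theory Submission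
  imports Defs
begin

context prob_space
begin

lemma cdf_distr_eq:
  fixes Y :: "'a \<Rightarrow> real"
  assumes [measurable]: "Y \<in> borel_measurable M"
  shows "cdf (distr M borel Y) w = measure M {\<omega>\<in>space M. Y \<omega> \<le> w}"
  unfolding cdf_def by (subst measure_distr) (auto intro!: arg_cong[where f="measure M"])

lemma cdf_distr_fun:
  fixes Y :: "'a \<Rightarrow> real"
  assumes [measurable]: "Y \<in> borel_measurable M"
  shows "cdf (distr M borel Y) = (\<lambda>w. measure M {\<omega>\<in>space M. Y \<omega> \<le> w})"
  using cdf_distr_eq[OF assms] by auto

lemma measure_distr_lessThan:
  fixes Y :: "'a \<Rightarrow> real"
  assumes [measurable]: "Y \<in> borel_measurable M"
  shows "measure (distr M borel Y) {..<a} = measure M {\<omega>\<in>space M. Y \<omega> < a}"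
  by (subst measure_distr) (auto intro!: arg_cong[where f="measure M"])

lemma measure_distr_single:
  fixes Y :: "'a \<Rightarrow> real"
  assumes [measurable]: "Y \<in> borel_measurable M"
  shows "measure (distr M borel Y) {a} = measure M {\<omega>\<in>space M. Y \<omega> = a}"
  by (subst measure_distr) (auto intro!: arg_cong[where f="measure M"])

lemma G_mono:
  fixes Y :: "'a \<Rightarrow> real"
  assumes [measurable]: "Y \<in> borel_measurable M" and "x \<le> y"
  shows "measure M {\<omega>\<in>space M. Y \<omega> \<le> x} \<le> measure M {\<omega>\<in>space M. Y \<omega> \<le> y}"
  using assms(2) by (intro finite_measure_mono) auto

lemma G_at_top:
  fixes Y :: "'a \<Rightarrow> real"
  assumes [measurable]: "Y \<in> borel_measurable M"
  shows "((\<lambda>w. measure M {\<omega>\<in>space M. Y \<omega> \<le> w}) \<longlongrightarrow> 1) at_top"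
  using real_distribution.cdf_lim_at_top_prob[OF real_distribution_distr[OF assms]]
  by (simp add: cdf_distr_fun)

lemma G_at_bot:
  fixes Y :: "'a \<Rightarrow> real"
  assumes [measurable]: "Y \<in> borel_measurable M"
  shows "((\<lambda>w. measure M {\<omega>\<in>space M. Y \<omega> \<le> w}) \<longlongrightarrow> 0) at_bot"
  using finite_borel_measure.cdf_lim_at_bot[OF real_distribution.finite_borel_measure_M[OF real_distribution_distr[OF assms]]]
  by (simp add: cdf_distr_fun)

lemma G_right:
  fixes Y :: "'a \<Rightarrow> real"
  assumes [measurable]: "Y \<in> borel_measurable M"
  shows "continuous (at_right a) (\<lambda>w. measure M {\<omega>\<in>space M. Y \<omega> \<le> w})"
  using finite_borel_measure.cdf_is_right_cont[OF real_distribution.finite_borel_measure_M[OF real_distribution_distr[OF assms]]]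
  by (simp add: cdf_distr_fun)

lemma G_left:
  fixes Y :: "'a \<Rightarrow> real"
  assumes [measurable]: "Y \<in> borel_measurable M"
  shows "((\<lambda>w. measure M {\<omega>\<in>space M. Y \<omega> \<le> w}) \<longlongrightarrow> measure M {\<omega>\<in>space M. Y \<omega> < a}) (at_left a)"
  using finite_borel_measure.cdf_at_left[OF real_distribution.finite_borel_measure_M[OF real_distribution_distr[OF assms]]]
  by (simp add: cdf_distr_fun measure_distr_lessThan)

lemma G_cont:
  fixes Y :: "'a \<Rightarrow> real"
  assumes [measurable]: "Y \<in> borel_measurable M" and "measure M {\<omega>\<in>space M. Y \<omega> = a} = 0"
  shows "isCont (\<lambda>w. measure M {\<omega>\<in>space M. Y \<omega> \<le> w}) a"
  using finite_borel_measure.isCont_cdf[OF real_distribution.finite_borel_measure_M[OF real_distribution_distr[OF assms(1)]]] assms(2)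
  by (simp add: cdf_distr_fun measure_distr_single)

lemma less_le_bound:
  fixes Y :: "'a \<Rightarrow> real"
  assumes [measurable]: "Y \<in> borel_measurable M"
    and "\<And>x. x < a \<Longrightarrow> measure M {\<omega>\<in>space M. Y \<omega> \<le> x} \<le> t"
  shows "measure M {\<omega>\<in>space M. Y \<omega> < a} \<le> t"
proof (rule tendsto_upperbound[OF G_left[OF assms(1)]])
  show "\<forall>\<^sub>F x in at_left a. measure M {\<omega> \<in> space M. Y \<omega> \<le> x} \<le> t"
    unfolding eventually_at_left_field by (intro exI[of _ "a - 1"]) (auto intro: assms(2))
qed simp

lemma VaR_ne:
  fixes Y :: "'a \<Rightarrow> real"
  assumes [measurable]: "Y \<in> borel_measurable M" and "t < 1"
  shows "\<exists>x. t \<le> measure M {\<omega>\<in>space M. Y \<omega> \<le> x}"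
proof -
  have "\<forall>\<^sub>F w in at_top. t < measure M {\<omega>\<in>space M. Y \<omega> \<le> w}"
    using order_tendstoD(1)[OF G_at_top[OF assms(1)]] assms(2) by auto
  then obtain x where "t < measure M {\<omega>\<in>space M. Y \<omega> \<le> x}"
    by (auto simp: eventually_at_top_linorder)
  then show ?thesis by (auto intro: less_imp_le)
qed

lemma VaR_bdd:
  fixes Y :: "'a \<Rightarrow> real"
  assumes [measurable]: "Y \<in> borel_measurable M" and "0 < t"
  shows "bdd_below {x. t \<le> measure M {\<omega>\<in>space M. Y \<omega> \<le> x}}"
proof -
  have "\<forall>\<^sub>F w in at_bot. measure M {\<omega>\<in>space M. Y \<omega> \<le> w} < t"
    using order_tendstoD(2)[OF G_at_bot[OF assms(1)]] assms(2) by auto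
  then obtain b where b: "\<And>w. w \<le> b \<Longrightarrow> measure M {\<omega>\<in>space M. Y \<omega> \<le> w} < t"
    by (auto simp: eventually_at_bot_linorder)
  show ?thesis
  proof (rule bdd_belowI)
    fix x assume "x \<in> {x. t \<le> measure M {\<omega>\<in>space M. Y \<omega> \<le> x}}"
    then show "b \<le> x" using b[of x] by force
  qed
qed

lemma VaR_le:
  fixes Y :: "'a \<Rightarrow> real"
  assumes [measurable]: "Y \<in> borel_measurable M" and "0 < t"
    and "t \<le> measure M {\<omega>\<in>space M. Y \<omega> \<le> w}"
  shows "VaR M t Y \<le> w"
  unfolding VaR_def using assms by (intro cInf_lower VaR_bdd) auto

lemma VaR_lt:
  fixes Y :: "'a \<Rightarrow> real"
  assumes [measurable]: "Y \<in> borel_measurable M" and "0 < t"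
    and "w < VaR M t Y"
  shows "measure M {\<omega>\<in>space M. Y \<omega> \<le> w} < t"
  using VaR_le[OF assms(1,2), of w] assms(3) by force

lemma VaR_ge:
  fixes Y :: "'a \<Rightarrow> real"
  assumes [measurable]: "Y \<in> borel_measurable M" and "0 < t" "t < 1"
  shows "t \<le> measure M {\<omega>\<in>space M. Y \<omega> \<le> VaR M t Y}"
proof (rule tendsto_lowerbound)
  let ?G = "\<lambda>w. measure M {\<omega>\<in>space M. Y \<omega> \<le> w}"
  let ?a = "VaR M t Y"
  show "(?G \<longlongrightarrow> ?G ?a) (at_right ?a)"
    using G_right[OF assms(1), of ?a] by (simp add: continuous_within)
  show "\<forall>\<^sub>F x in at_right ?a. t \<le> ?G x"
    unfolding eventually_at_right_field
  proof (intro exI[of _ "?a + 1"] conjI allI impI)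
    fix y assume "?a < y"
    then have "Inf {x. t \<le> ?G x} < y" by (simp add: VaR_def)
    then obtain s where s: "t \<le> ?G s" "s < y"
      using cInf_lessD[of "{x. t \<le> ?G x}" y] VaR_ne[OF assms(1) assms(3)] by auto
    then show "t \<le> ?G y" using G_mono[OF assms(1), of s y] by linarith
  qed simp
qed simp

lemma VaR_mono:
  fixes Y :: "'a \<Rightarrow> real"
  assumes [measurable]: "Y \<in> borel_measurable M" and "0 < s" "s \<le> t" "t < 1"
  shows "VaR M s Y \<le> VaR M t Y"
  unfolding VaR_def
  using assms VaR_ne[OF assms(1) assms(4)] VaR_bdd[OF assms(1) assms(2)]
  by (intro cInf_superset_mono) auto

lemma VaR_less:
  fixes Y :: "'a \<Rightarrow> real"
  assumes [measurable]: "Y \<in> borel_measurable M" and "0 < t"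
  shows "measure M {\<omega>\<in>space M. Y \<omega> < VaR M t Y} \<le> t"
  using less_le_bound[OF assms(1)] VaR_lt[OF assms] by (meson less_imp_le)

end

definition rcdf :: "'a measure \<Rightarrow> 'a set \<Rightarrow> ('a \<Rightarrow> real) \<Rightarrow> real \<Rightarrow> real" where
  "rcdf M E Y t = measure M {\<omega>\<in>space M. \<omega> \<in> E \<and> Y \<omega> \<le> t}"

context prob_space
begin

lemma rcdf_mono:
  fixes Y :: "'a \<Rightarrow> real"
  assumes [measurable]: "Y \<in> borel_measurable M" "E \<in> sets M" and "s \<le> t"
  shows "rcdf M E Y s \<le> rcdf M E Y t"
  unfolding rcdf_def using assms(3) by (intro finite_measure_mono) auto

lemma rcdf_mono': "Y \<in> borel_measurable M \<Longrightarrow> E \<in> sets M \<Longrightarrow> mono (rcdf M E Y)"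
  by (auto intro!: monoI rcdf_mono)

lemma rcdf_measurable[measurable]:
  "Y \<in> borel_measurable M \<Longrightarrow> E \<in> sets M \<Longrightarrow> rcdf M E Y \<in> borel_measurable borel"
  by (intro borel_measurable_mono rcdf_mono')

lemma rcdf_diff:
  fixes Y :: "'a \<Rightarrow> real"
  assumes [measurable]: "Y \<in> borel_measurable M" "E \<in> sets M" and "s \<le> t"
  shows "rcdf M E Y t - rcdf M E Y s \<le> measure M {\<omega>\<in>space M. Y \<omega> \<le> t} - measure M {\<omega>\<in>space M. Y \<omega> \<le> s}"
proof -
  have "rcdf M E Y t - rcdf M E Y s = measure M ({\<omega>\<in>space M. \<omega> \<in> E \<and> Y \<omega> \<le> t} - {\<omega>\<in>space M. \<omega> \<in> E \<and> Y \<omega> \<le> s})"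
    unfolding rcdf_def using assms(3) by (subst finite_measure_Diff) auto
  also have "\<dots> \<le> measure M ({\<omega>\<in>space M. Y \<omega> \<le> t} - {\<omega>\<in>space M. Y \<omega> \<le> s})"
    by (intro finite_measure_mono) auto
  also have "\<dots> = measure M {\<omega>\<in>space M. Y \<omega> \<le> t} - measure M {\<omega>\<in>space M. Y \<omega> \<le> s}"
    using assms(3) by (subst finite_measure_Diff) auto
  finally show ?thesis .
qed

lemma rcdf_le_G:
  fixes Y :: "'a \<Rightarrow> real"
  assumes [measurable]: "Y \<in> borel_measurable M" "E \<in> sets M"
  shows "rcdf M E Y t \<le> measure M {\<omega>\<in>space M. Y \<omega> \<le> t}"
  unfolding rcdf_def by (intro finite_measure_mono) auto

lemma rcdf_compl:
  fixes Y :: "'a \<Rightarrow> real"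
  assumes [measurable]: "Y \<in> borel_measurable M" "E \<in> sets M"
  shows "measure M E - rcdf M E Y t \<le> 1 - measure M {\<omega>\<in>space M. Y \<omega> \<le> t}"
proof -
  have "measure M E - rcdf M E Y t = measure M (E - {\<omega>\<in>space M. \<omega> \<in> E \<and> Y \<omega> \<le> t})"
    unfolding rcdf_def by (subst finite_measure_Diff) auto
  also have "\<dots> \<le> measure M (space M - {\<omega>\<in>space M. Y \<omega> \<le> t})"
    using sets.sets_into_space[OF assms(2)] by (intro finite_measure_mono) auto
  also have "\<dots> = 1 - measure M {\<omega>\<in>space M. Y \<omega> \<le> t}"
    by (subst finite_measure_Diff) (auto simp: prob_space)
  finally show ?thesis .
qed

lemma rcdf_le_E:
  assumes [measurable]: "Y \<in> borel_measurable M" "E \<in> sets M"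
  shows "rcdf M E Y t \<le> measure M E"
  unfolding rcdf_def by (intro finite_measure_mono) auto

lemma rcdf_isCont:
  fixes Y :: "'a \<Rightarrow> real"
  assumes [measurable]: "Y \<in> borel_measurable M" "E \<in> sets M"
    and atl: "\<And>a. measure M {\<omega>\<in>space M. Y \<omega> = a} = 0"
  shows "isCont (rcdf M E Y) a"
proof -
  let ?G = "\<lambda>w. measure M {\<omega>\<in>space M. Y \<omega> \<le> w}"
  have bnd: "\<bar>rcdf M E Y x - rcdf M E Y a\<bar> \<le> \<bar>?G x - ?G a\<bar>" for x
  proof (cases "x \<le> a")
    case True
    then show ?thesis using rcdf_diff[OF assms(1,2) True] rcdf_mono[OF assms(1,2) True] G_mono[OF assms(1) True]
      by linarith
  next
    case False
    have ax: "a \<le> x" using False by simp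
    show ?thesis using rcdf_diff[OF assms(1,2) ax] rcdf_mono[OF assms(1,2) ax] G_mono[OF assms(1) ax]
      by linarith
  qed
  have "((\<lambda>x. ?G x - ?G a) \<longlongrightarrow> 0) (at a)"
    using G_cont[OF assms(1) atl] by (simp add: isCont_def LIM_zero_iff)
  then have lim0: "((\<lambda>x. \<bar>?G x - ?G a\<bar>) \<longlongrightarrow> 0) (at a)" by (rule tendsto_rabs_zero)
  have "((\<lambda>x. rcdf M E Y x - rcdf M E Y a) \<longlongrightarrow> 0) (at a)"
    by (intro Lim_null_comparison[OF _ lim0]) (auto simp: bnd)
  then show ?thesis by (simp add: isCont_def LIM_zero_iff)
qed

lemma rcdf_at_bot:
  fixes Y :: "'a \<Rightarrow> real"
  assumes [measurable]: "Y \<in> borel_measurable M" "E \<in> sets M" and "0 < m"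
  shows "\<exists>a. rcdf M E Y a < m"
proof -
  have "\<forall>\<^sub>F w in at_bot. measure M {\<omega>\<in>space M. Y \<omega> \<le> w} < m"
    using order_tendstoD(2)[OF G_at_bot[OF assms(1)]] assms(3) by auto
  then obtain a where "measure M {\<omega>\<in>space M. Y \<omega> \<le> a} < m"
    by (auto simp: eventually_at_bot_linorder)
  then show ?thesis using rcdf_le_G[OF assms(1,2), of a] by (intro exI[of _ a]) linarith
qed

lemma rcdf_at_top:
  fixes Y :: "'a \<Rightarrow> real"
  assumes [measurable]: "Y \<in> borel_measurable M" "E \<in> sets M" and "m < measure M E"
  shows "\<exists>b. m < rcdf M E Y b"
proof -
  have "\<forall>\<^sub>F w in at_top. 1 - (measure M E - m) < measure M {\<omega>\<in>space M. Y \<omega> \<le> w}"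
    using order_tendstoD(1)[OF G_at_top[OF assms(1)]] assms(3) by auto
  then obtain b where "1 - (measure M E - m) < measure M {\<omega>\<in>space M. Y \<omega> \<le> b}"
    by (auto simp: eventually_at_top_linorder)
  then show ?thesis using rcdf_compl[OF assms(1,2), of b] by (intro exI[of _ b]) linarith
qed

lemma rcdf_IVT:
  fixes Y :: "'a \<Rightarrow> real"
  assumes [measurable]: "Y \<in> borel_measurable M" "E \<in> sets M"
    and atl: "\<And>a. measure M {\<omega>\<in>space M. Y \<omega> = a} = 0"
    and "0 < m" "m < measure M E"
  shows "\<exists>t. rcdf M E Y t = m"
proof -
  obtain a where a: "rcdf M E Y a < m" using rcdf_at_bot[OF assms(1,2,4)] by auto
  obtain b where b: "m < rcdf M E Y b" using rcdf_at_top[OF assms(1,2,5)] by auto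
  have "a \<le> b"
  proof (rule ccontr)
    assume "\<not> a \<le> b"
    then have "b \<le> a" by simp
    from rcdf_mono[OF assms(1,2) this] a b show False by simp
  qed
  have "\<exists>x. a \<le> x \<and> x \<le> b \<and> rcdf M E Y x = m"
    using a b \<open>a \<le> b\<close> rcdf_isCont[OF assms(1,2) atl]
    by (intro IVT) auto
  then show ?thesis by auto
qed

lemma fiber_up:
  fixes Y :: "'a \<Rightarrow> real"
  assumes [measurable]: "Y \<in> borel_measurable M" "E \<in> sets M"
    and atl: "\<And>a. measure M {\<omega>\<in>space M. Y \<omega> = a} = 0"
    and "0 \<le> s"
  shows "measure M {\<omega>\<in>space M. \<omega> \<in> E \<and> rcdf M E Y (Y \<omega>) \<le> s} \<le> s"
proof (cases "measure M E \<le> s")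
  case True
  have "measure M {\<omega>\<in>space M. \<omega> \<in> E \<and> rcdf M E Y (Y \<omega>) \<le> s} \<le> measure M E"
    by (intro finite_measure_mono) auto
  then show ?thesis using True by linarith
next
  case False
  let ?R = "rcdf M E Y"
  define D where "D = {k. ?R k \<le> s}"
  obtain b where b: "s < ?R b" using rcdf_at_top[OF assms(1,2), of s] False by auto
  have Db: "k < b" if "k \<in> D" for k
  proof (rule ccontr)
    assume "\<not> k < b" then have "b \<le> k" by simp
    from rcdf_mono[OF assms(1,2) this] that b show False by (auto simp: D_def)
  qed
  then have bdd: "bdd_above D" by (meson bdd_aboveI less_imp_le)
  show ?thesis
  proof (cases "D = {}")
    case True
    have eq: "{\<omega>\<in>space M. \<omega> \<in> E \<and> ?R (Y \<omega>) \<le> s} = {}" using True by (auto simp: D_def)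
    show ?thesis by (simp only: eq) (simp add: assms(4))
  next
    case False
    define y where "y = Sup D"
    have Rle: "?R k \<le> s" if "k < y" for k
    proof -
      have "k < Sup D" using that y_def by simp
      then obtain d where "d \<in> D" "k < d" using less_cSupD[OF False] by blast
      then show ?thesis using rcdf_mono[OF assms(1,2), of k d] by (auto simp: D_def)
    qed
    have "?R y \<le> s"
    proof (rule tendsto_upperbound)
      show "(?R \<longlongrightarrow> ?R y) (at_left y)"
        using rcdf_isCont[OF assms(1,2) atl, of y] by (simp add: isCont_def filterlim_at_split)
      show "\<forall>\<^sub>F x in at_left y. ?R x \<le> s"
        unfolding eventually_at_left_field by (intro exI[of _ "y - 1"]) (auto intro: Rle)
    qed simp
    have "measure M {\<omega>\<in>space M. \<omega> \<in> E \<and> ?R (Y \<omega>) \<le> s} \<le> ?R y"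
      unfolding rcdf_def[of M E Y y]
    proof (intro finite_measure_mono)
      show "{\<omega>\<in>space M. \<omega> \<in> E \<and> ?R (Y \<omega>) \<le> s} \<subseteq> {\<omega>\<in>space M. \<omega> \<in> E \<and> Y \<omega> \<le> y}"
        using cSup_upper[OF _ bdd] by (auto simp: D_def y_def)
    qed auto
    then show ?thesis using \<open>?R y \<le> s\<close> by linarith
  qed
qed

lemma fiber_low:
  fixes Y :: "'a \<Rightarrow> real"
  assumes [measurable]: "Y \<in> borel_measurable M" "E \<in> sets M"
    and atl: "\<And>a. measure M {\<omega>\<in>space M. Y \<omega> = a} = 0"
    and "0 \<le> s" "s \<le> measure M E"
  shows "s \<le> measure M {\<omega>\<in>space M. \<omega> \<in> E \<and> rcdf M E Y (Y \<omega>) \<le> s}"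
proof -
  consider "s = 0" | "s = measure M E" | "0 < s" "s < measure M E" using assms(4,5) by linarith
  then show ?thesis
  proof cases
    case 1 then show ?thesis by simp
  next
    case 2
    have "{\<omega>\<in>space M. \<omega> \<in> E \<and> rcdf M E Y (Y \<omega>) \<le> s} = E"
      using rcdf_le_E[OF assms(1,2)] 2 sets.sets_into_space[OF assms(2)] by auto
    then show ?thesis using 2 by simp
  next
    case 3
    obtain t where t: "rcdf M E Y t = s" using rcdf_IVT[OF assms(1,2) atl 3] by auto
    have "s = measure M {\<omega>\<in>space M. \<omega> \<in> E \<and> Y \<omega> \<le> t}" using t by (simp add: rcdf_def)
    also have "\<dots> \<le> measure M {\<omega>\<in>space M. \<omega> \<in> E \<and> rcdf M E Y (Y \<omega>) \<le> s}"
      using rcdf_mono[OF assms(1,2)] t by (intro finite_measure_mono) auto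
    finally show ?thesis .
  qed
qed

end

definition lexU :: "'a measure \<Rightarrow> ('a \<Rightarrow> real) \<Rightarrow> ('a \<Rightarrow> real) \<Rightarrow> 'a \<Rightarrow> real" where
  "lexU M Z K \<omega> = measure M {\<omega>'\<in>space M. Z \<omega>' < Z \<omega> \<or> (Z \<omega>' = Z \<omega> \<and> K \<omega>' \<le> K \<omega>)}"

context prob_space
begin

lemma AE_null_pred:
  assumes "{\<omega>\<in>space M. P \<omega>} \<in> events" "prob {\<omega>\<in>space M. P \<omega>} = 0"
  shows "AE \<omega> in M. \<not> P \<omega>"
proof -
  have "{\<omega>\<in>space M. P \<omega>} \<in> null_sets M"
    using assms by (auto simp: null_sets_def emeasure_eq_measure)
  from AE_not_in[OF this] AE_space show ?thesis by eventually_elim auto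
qed

lemma lexU_split:
  fixes Z K :: "'a \<Rightarrow> real"
  assumes [measurable]: "Z \<in> borel_measurable M" "K \<in> borel_measurable M"
  shows "lexU M Z K \<omega> = measure M {\<omega>'\<in>space M. Z \<omega>' < Z \<omega>}
      + rcdf M {\<omega>'\<in>space M. Z \<omega>' = Z \<omega>} K (K \<omega>)"
proof -
  have "{\<omega>'\<in>space M. Z \<omega>' < Z \<omega> \<or> (Z \<omega>' = Z \<omega> \<and> K \<omega>' \<le> K \<omega>)}
     = {\<omega>'\<in>space M. Z \<omega>' < Z \<omega>} \<union> {\<omega>'\<in>space M. \<omega>' \<in> {\<omega>'\<in>space M. Z \<omega>' = Z \<omega>} \<and> K \<omega>' \<le> K \<omega>}"
    by auto
  then show ?thesis unfolding lexU_def rcdf_def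
    by (simp only:) (subst finite_measure_Union, auto)
qed

lemma lexU_le:
  fixes Z K :: "'a \<Rightarrow> real"
  assumes [measurable]: "Z \<in> borel_measurable M" "K \<in> borel_measurable M"
  shows "lexU M Z K \<omega> \<le> measure M {\<omega>'\<in>space M. Z \<omega>' \<le> Z \<omega>}"
  unfolding lexU_def by (intro finite_measure_mono) auto

lemma lexU_ge:
  fixes Z K :: "'a \<Rightarrow> real"
  assumes [measurable]: "Z \<in> borel_measurable M" "K \<in> borel_measurable M"
  shows "measure M {\<omega>'\<in>space M. Z \<omega>' < Z \<omega>} \<le> lexU M Z K \<omega>"
  unfolding lexU_def by (intro finite_measure_mono) auto

lemma lexU_nonneg: "0 \<le> lexU M Z K \<omega>"
  unfolding lexU_def by simp

lemma measure_split_le: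
  fixes Z :: "'a \<Rightarrow> real"
  assumes [measurable]: "Z \<in> borel_measurable M"
  shows "measure M {\<omega>\<in>space M. Z \<omega> \<le> c} = measure M {\<omega>\<in>space M. Z \<omega> < c} + measure M {\<omega>\<in>space M. Z \<omega> = c}"
proof -
  have "{\<omega>\<in>space M. Z \<omega> \<le> c} = {\<omega>\<in>space M. Z \<omega> < c} \<union> {\<omega>\<in>space M. Z \<omega> = c}" by auto
  then show ?thesis by (simp only:) (subst finite_measure_Union, auto)
qed

lemma measure_gt:
  fixes Z :: "'a \<Rightarrow> real"
  assumes [measurable]: "Z \<in> borel_measurable M"
  shows "measure M {\<omega>\<in>space M. c < Z \<omega>} = 1 - measure M {\<omega>\<in>space M. Z \<omega> \<le> c}"
proof -
  have "{\<omega>\<in>space M. c < Z \<omega>} = space M - {\<omega>\<in>space M. Z \<omega> \<le> c}" by auto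
  then show ?thesis by (simp only:) (subst finite_measure_Diff, auto simp: prob_space)
qed

lemma U_low:
  fixes Z K :: "'a \<Rightarrow> real"
  assumes [measurable]: "Z \<in> borel_measurable M" "K \<in> borel_measurable M"
    and Um[measurable]: "lexU M Z K \<in> borel_measurable M"
    and atl: "\<And>k. measure M {\<omega>\<in>space M. K \<omega> = k} = 0"
    and a: "0 < a" "a < 1"
  shows "a \<le> measure M {\<omega>\<in>space M. lexU M Z K \<omega> \<le> a}"
proof -
  define z where "z = VaR M a Z"
  define E where "E = {\<omega>\<in>space M. Z \<omega> = z}"
  define L where "L = {\<omega>\<in>space M. Z \<omega> < z}"
  define s where "s = a - measure M L"
  define F where "F = {\<omega>\<in>space M. \<omega> \<in> E \<and> rcdf M E K (K \<omega>) \<le> s}"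
  have [measurable]: "E \<in> sets M" "L \<in> sets M" unfolding E_def L_def by auto
  have [measurable]: "F \<in> sets M" unfolding F_def
    using rcdf_measurable[of K E] by measurable
  have PL: "measure M L \<le> a" unfolding L_def z_def using VaR_less[OF assms(1) a(1)] .
  have Gz: "a \<le> measure M {\<omega>\<in>space M. Z \<omega> \<le> z}" unfolding z_def using VaR_ge[OF assms(1) a] .
  have PE: "measure M E = measure M {\<omega>\<in>space M. Z \<omega> \<le> z} - measure M L"
    unfolding E_def L_def using measure_split_le[OF assms(1), of z] by simp
  have s: "0 \<le> s" "s \<le> measure M E" using PL Gz PE s_def by auto
  have PF: "s \<le> measure M F" unfolding F_def using fiber_low[OF assms(2) _ atl s] by simp
  have sub: "L \<union> F \<subseteq> {\<omega>\<in>space M. lexU M Z K \<omega> \<le> a}"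
  proof
    fix \<omega> assume \<omega>: "\<omega> \<in> L \<union> F"
    then have sp: "\<omega> \<in> space M" by (auto simp: L_def F_def)
    show "\<omega> \<in> {\<omega>\<in>space M. lexU M Z K \<omega> \<le> a}"
    proof (cases "\<omega> \<in> L")
      case True
      then have "Z \<omega> < z" by (simp add: L_def)
      then have "measure M {\<omega>'\<in>space M. Z \<omega>' \<le> Z \<omega>} < a"
        using VaR_lt[OF assms(1) a(1)] z_def by simp
      then show ?thesis using lexU_le[OF assms(1,2), of \<omega>] sp by simp
    next
      case False
      then have "\<omega> \<in> F" using \<omega> by simp
      then have "Z \<omega> = z" "rcdf M E K (K \<omega>) \<le> s" by (auto simp: F_def E_def)
      then have "lexU M Z K \<omega> = measure M L + rcdf M E K (K \<omega>)"
        using lexU_split[OF assms(1,2), of \<omega>] by (simp add: L_def E_def)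
      then show ?thesis using \<open>rcdf M E K (K \<omega>) \<le> s\<close> s_def sp by simp
    qed
  qed
  have "measure M (L \<union> F) = measure M L + measure M F"
    by (intro finite_measure_Union) (auto simp: L_def F_def E_def)
  then have "a \<le> measure M (L \<union> F)" using PF s_def by simp
  also have "\<dots> \<le> measure M {\<omega>\<in>space M. lexU M Z K \<omega> \<le> a}"
    using sub by (intro finite_measure_mono) auto
  finally show ?thesis .
qed

lemma U_high:
  fixes Z K :: "'a \<Rightarrow> real"
  assumes [measurable]: "Z \<in> borel_measurable M" "K \<in> borel_measurable M"
    and Um[measurable]: "lexU M Z K \<in> borel_measurable M"
    and atl: "\<And>k. measure M {\<omega>\<in>space M. K \<omega> = k} = 0"
    and a: "0 < a" "a < 1"
  shows "1 - a \<le> measure M {\<omega>\<in>space M. a \<le> lexU M Z K \<omega>}"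
proof -
  define z where "z = VaR M a Z"
  define E where "E = {\<omega>\<in>space M. Z \<omega> = z}"
  define L where "L = {\<omega>\<in>space M. Z \<omega> < z}"
  define H where "H = {\<omega>\<in>space M. z < Z \<omega>}"
  define s where "s = a - measure M L"
  define F where "F = {\<omega>\<in>space M. \<omega> \<in> E \<and> rcdf M E K (K \<omega>) \<le> s}"
  have [measurable]: "E \<in> sets M" "L \<in> sets M" "H \<in> sets M" unfolding E_def L_def H_def by auto
  have [measurable]: "F \<in> sets M" unfolding F_def
    using rcdf_measurable[of K E] by measurable
  have PL: "measure M L \<le> a" unfolding L_def z_def using VaR_less[OF assms(1) a(1)] .
  have Gz: "a \<le> measure M {\<omega>\<in>space M. Z \<omega> \<le> z}" unfolding z_def using VaR_ge[OF assms(1) a] .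
  have PE: "measure M E = measure M {\<omega>\<in>space M. Z \<omega> \<le> z} - measure M L"
    unfolding E_def L_def using measure_split_le[OF assms(1), of z] by simp
  have PH: "measure M H = 1 - measure M {\<omega>\<in>space M. Z \<omega> \<le> z}"
    unfolding H_def using measure_gt[OF assms(1)] .
  have s: "0 \<le> s" using PL s_def by auto
  have PF: "measure M F \<le> s" unfolding F_def using fiber_up[OF assms(2) _ atl s] by simp
  have FE: "F \<subseteq> E" by (auto simp: F_def)
  have PEF: "measure M (E - F) = measure M E - measure M F"
    using FE by (intro finite_measure_Diff) auto
  have sub: "H \<union> (E - F) \<subseteq> {\<omega>\<in>space M. a \<le> lexU M Z K \<omega>}"
  proof
    fix \<omega> assume \<omega>: "\<omega> \<in> H \<union> (E - F)"
    then have sp: "\<omega> \<in> space M" by (auto simp: H_def E_def)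
    show "\<omega> \<in> {\<omega>\<in>space M. a \<le> lexU M Z K \<omega>}"
    proof (cases "\<omega> \<in> H")
      case True
      then have "z < Z \<omega>" by (simp add: H_def)
      then have "measure M {\<omega>'\<in>space M. Z \<omega>' \<le> z} \<le> measure M {\<omega>'\<in>space M. Z \<omega>' < Z \<omega>}"
        by (intro finite_measure_mono) auto
      then show ?thesis using lexU_ge[OF assms(1,2), of \<omega>] sp Gz by simp
    next
      case False
      then have "\<omega> \<in> E - F" using \<omega> by simp
      then have "Z \<omega> = z" "\<not> rcdf M E K (K \<omega>) \<le> s" by (auto simp: F_def E_def)
      then have "lexU M Z K \<omega> = measure M L + rcdf M E K (K \<omega>)"
        using lexU_split[OF assms(1,2), of \<omega>] by (simp add: L_def E_def)
      then show ?thesis using \<open>\<not> rcdf M E K (K \<omega>) \<le> s\<close> s_def sp by simp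
    qed
  qed
  have "measure M (H \<union> (E - F)) = measure M H + measure M (E - F)"
    by (intro finite_measure_Union) (auto simp: H_def E_def)
  then have "1 - a \<le> measure M (H \<union> (E - F))" using PF PEF PE PH s_def by simp
  also have "\<dots> \<le> measure M {\<omega>\<in>space M. a \<le> lexU M Z K \<omega>}"
    using sub by (intro finite_measure_mono) auto
  finally show ?thesis .
qed

lemma U_exact:
  fixes Z K :: "'a \<Rightarrow> real"
  assumes [measurable]: "Z \<in> borel_measurable M" "K \<in> borel_measurable M"
    and Um[measurable]: "lexU M Z K \<in> borel_measurable M"
    and atl: "\<And>k. measure M {\<omega>\<in>space M. K \<omega> = k} = 0"
    and a: "0 \<le> a" "a < 1"
  shows "measure M {\<omega>\<in>space M. lexU M Z K \<omega> \<le> a} = a"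
proof (rule antisym)
  show "measure M {\<omega>\<in>space M. lexU M Z K \<omega> \<le> a} \<le> a"
  proof (rule dense_ge_bounded[OF a(2)])
    fix w assume w: "a < w" "w < 1"
    have "measure M {\<omega>\<in>space M. lexU M Z K \<omega> \<le> a} \<le> measure M (space M - {\<omega>\<in>space M. w \<le> lexU M Z K \<omega>})"
      using w by (intro finite_measure_mono) auto
    also have "\<dots> = 1 - measure M {\<omega>\<in>space M. w \<le> lexU M Z K \<omega>}"
      by (subst finite_measure_Diff) (auto simp: prob_space)
    also have "\<dots> \<le> w" using U_high[OF assms(1-4), of w] w a by simp
    finally show "measure M {\<omega>\<in>space M. lexU M Z K \<omega> \<le> a} \<le> w" .
  qed
  show "a \<le> measure M {\<omega>\<in>space M. lexU M Z K \<omega> \<le> a}"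
  proof (cases "a = 0")
    case True then show ?thesis by simp
  next
    case False then show ?thesis using U_low[OF assms(1-4), of a] a by simp
  qed
qed

lemma U_lt1:
  fixes Z K :: "'a \<Rightarrow> real"
  assumes [measurable]: "Z \<in> borel_measurable M" "K \<in> borel_measurable M"
    and Um[measurable]: "lexU M Z K \<in> borel_measurable M"
    and atl: "\<And>k. measure M {\<omega>\<in>space M. K \<omega> = k} = 0"
  shows "AE \<omega> in M. 0 < lexU M Z K \<omega> \<and> lexU M Z K \<omega> < 1"
proof -
  have "AE \<omega> in M. \<not> lexU M Z K \<omega> \<le> 0"
    by (rule AE_null_pred) (auto simp: U_exact[OF assms, of 0])
  moreover have "AE \<omega> in M. \<not> 1 \<le> lexU M Z K \<omega>"
  proof (rule AE_null_pred)
    show "prob {\<omega> \<in> space M. 1 \<le> lexU M Z K \<omega>} = 0"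
    proof (rule antisym)
      show "prob {\<omega> \<in> space M. 1 \<le> lexU M Z K \<omega>} \<le> 0"
      proof (rule dense_ge_bounded[of 0 1])
        fix w :: real assume w: "0 < w" "w < 1"
        have "prob {\<omega> \<in> space M. 1 \<le> lexU M Z K \<omega>} \<le> prob (space M - {\<omega> \<in> space M. lexU M Z K \<omega> \<le> 1 - w})"
          using w by (intro finite_measure_mono) auto
        also have "\<dots> = 1 - prob {\<omega> \<in> space M. lexU M Z K \<omega> \<le> 1 - w}"
          by (subst finite_measure_Diff) (auto simp: prob_space)
        also have "\<dots> = w" using U_exact[OF assms, of "1 - w"] w by simp
        finally show "prob {\<omega> \<in> space M. 1 \<le> lexU M Z K \<omega>} \<le> w" .
      qed simp
    qed simp
  qed simp
  ultimately show ?thesis by eventually_elim (auto simp: not_le)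
qed

lemma U_VaR:
  fixes Z K :: "'a \<Rightarrow> real"
  assumes [measurable]: "Z \<in> borel_measurable M" "K \<in> borel_measurable M"
    and Um[measurable]: "lexU M Z K \<in> borel_measurable M"
    and atl: "\<And>k. measure M {\<omega>\<in>space M. K \<omega> = k} = 0"
  shows "AE \<omega> in M. VaR M (lexU M Z K \<omega>) Z = Z \<omega>"
proof -
  let ?U = "lexU M Z K"
  let ?G = "\<lambda>w. measure M {\<omega>\<in>space M. Z \<omega> \<le> w}"
  have N: "AE \<omega> in M. \<not> (r < Z \<omega> \<and> ?U \<omega> \<le> ?G r)" for r
  proof (rule AE_null_pred)
    show "prob {\<omega> \<in> space M. r < Z \<omega> \<and> ?U \<omega> \<le> ?G r} = 0"
    proof (cases "?G r < 1")
      case True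
      have sub: "{\<omega> \<in> space M. Z \<omega> \<le> r} \<subseteq> {\<omega> \<in> space M. ?U \<omega> \<le> ?G r}"
        using lexU_le[OF assms(1,2)] G_mono[OF assms(1)] by (auto intro: order_trans)
      have "{\<omega> \<in> space M. r < Z \<omega> \<and> ?U \<omega> \<le> ?G r} = {\<omega> \<in> space M. ?U \<omega> \<le> ?G r} - {\<omega> \<in> space M. Z \<omega> \<le> r}"
        by auto
      also have "prob \<dots> = prob {\<omega> \<in> space M. ?U \<omega> \<le> ?G r} - ?G r"
        using sub by (subst finite_measure_Diff) auto
      also have "\<dots> = 0" using U_exact[OF assms, of "?G r"] True by simp
      finally show ?thesis .
    next
      case False
      then have "?G r = 1" using prob_le_1[of "{\<omega> \<in> space M. Z \<omega> \<le> r}"] by simp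
      then have "prob {\<omega> \<in> space M. r < Z \<omega>} = 0" using measure_gt[OF assms(1), of r] by simp
      moreover have "prob {\<omega> \<in> space M. r < Z \<omega> \<and> ?U \<omega> \<le> ?G r} \<le> prob {\<omega> \<in> space M. r < Z \<omega>}"
        by (intro finite_measure_mono) auto
      ultimately show ?thesis using measure_nonneg[of M "{\<omega> \<in> space M. r < Z \<omega> \<and> ?U \<omega> \<le> ?G r}"] by linarith
    qed
  qed simp
  have "AE \<omega> in M. \<forall>r::rat. \<not> (of_rat r < Z \<omega> \<and> ?U \<omega> \<le> ?G (of_rat r))"
    using N by (subst AE_all_countable) auto
  with U_lt1[OF assms] AE_space show ?thesis
  proof eventually_elim
    case (elim \<omega>)
    then have U: "0 < ?U \<omega>" "?U \<omega> < 1" and sp: "\<omega> \<in> space M" by auto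
    from elim have hr: "\<forall>r::rat. \<not> (of_rat r < Z \<omega> \<and> ?U \<omega> \<le> ?G (of_rat r))" by blast
    show "VaR M (?U \<omega>) Z = Z \<omega>"
    proof (rule antisym)
      show "VaR M (?U \<omega>) Z \<le> Z \<omega>"
        using VaR_le[OF assms(1) U(1)] lexU_le[OF assms(1,2), of \<omega>] by simp
      show "Z \<omega> \<le> VaR M (?U \<omega>) Z"
      proof (rule ccontr)
        assume "\<not> Z \<omega> \<le> VaR M (?U \<omega>) Z"
        then obtain r :: rat where r: "VaR M (?U \<omega>) Z < of_rat r" "of_rat r < Z \<omega>"
          using of_rat_dense by (meson not_le)
        have "?U \<omega> \<le> ?G (VaR M (?U \<omega>) Z)" using VaR_ge[OF assms(1) U] .
        also have "\<dots> \<le> ?G (of_rat r)" using G_mono[OF assms(1)] r(1) by simp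
        finally show False using hr r(2) by auto
      qed
    qed
  qed
qed

end

context prob_space
begin

lemma AE_prob0:
  assumes "AE \<omega> in M. P \<omega>" "{\<omega>\<in>space M. \<not> P \<omega>} \<in> events"
  shows "prob {\<omega>\<in>space M. \<not> P \<omega>} = 0"
  using assms AE_iff_measurable[OF assms(2) refl] by (simp add: emeasure_eq_measure)

lemma U_A:
  fixes Z K :: "'a \<Rightarrow> real"
  assumes [measurable]: "Z \<in> borel_measurable M" "K \<in> borel_measurable M"
    and Um[measurable]: "lexU M Z K \<in> borel_measurable M"
    and atl: "\<And>k. measure M {\<omega>\<in>space M. K \<omega> = k} = 0"
    and p: "0 < p" "p < 1"
    and c: "c = VaR M p Z"
    and A[measurable]: "A \<in> events" and PA: "prob A = 1 - p"
    and up: "AE \<omega> in M. c < Z \<omega> \<longrightarrow> \<omega> \<in> A"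
    and down: "AE \<omega> in M. \<omega> \<in> A \<longrightarrow> c \<le> Z \<omega>"
    and KA: "\<forall>\<omega>\<in>space M. (\<omega> \<in> A \<longleftrightarrow> k0 < K \<omega>)"
  shows "AE \<omega> in M. (\<omega> \<in> A \<longleftrightarrow> p < lexU M Z K \<omega>)"
proof -
  let ?U = "lexU M Z K"
  define H where "H = {\<omega>\<in>space M. c < Z \<omega>}"
  define E where "E = {\<omega>\<in>space M. Z \<omega> = c}"
  define L where "L = {\<omega>\<in>space M. Z \<omega> < c}"
  have [measurable]: "H \<in> events" "E \<in> events" "L \<in> events" by (auto simp: H_def E_def L_def)
  have Asp: "A \<subseteq> space M" using sets.sets_into_space[OF A] .
  have HA0: "prob (H - A) = 0"
  proof -
    have "prob {\<omega>\<in>space M. \<not> (c < Z \<omega> \<longrightarrow> \<omega> \<in> A)} = 0" by (rule AE_prob0[OF up]) auto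
    moreover have "{\<omega>\<in>space M. \<not> (c < Z \<omega> \<longrightarrow> \<omega> \<in> A)} = H - A" by (auto simp: H_def)
    ultimately show ?thesis by simp
  qed
  have AL0: "prob (A \<inter> L) = 0"
  proof -
    have "prob {\<omega>\<in>space M. \<not> (\<omega> \<in> A \<longrightarrow> c \<le> Z \<omega>)} = 0" by (rule AE_prob0[OF down]) auto
    moreover have "{\<omega>\<in>space M. \<not> (\<omega> \<in> A \<longrightarrow> c \<le> Z \<omega>)} = A \<inter> L" using Asp by (auto simp: L_def)
    ultimately show ?thesis by simp
  qed
  have PH: "prob H = 1 - measure M {\<omega>\<in>space M. Z \<omega> \<le> c}" unfolding H_def using measure_gt[OF assms(1)] .
  have PE: "prob E = measure M {\<omega>\<in>space M. Z \<omega> \<le> c} - prob L"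
    unfolding E_def L_def using measure_split_le[OF assms(1), of c] by simp
  have PL: "prob L \<le> p" unfolding L_def c using VaR_less[OF assms(1) p(1)] .
  have AHE: "prob (A \<inter> H) = prob H"
  proof -
    have "prob H = prob (A \<inter> H) + prob (H - A)"
      by (subst finite_measure_Union[symmetric]) (auto intro!: arg_cong[where f=prob])
    then show ?thesis using HA0 by simp
  qed
  have decomp: "prob A = prob (A \<inter> H) + prob (A \<inter> E) + prob (A \<inter> L)"
  proof -
    have "A = (A \<inter> H) \<union> (A \<inter> E) \<union> (A \<inter> L)" using Asp by (auto simp: H_def E_def L_def)
    then have "prob A = prob ((A \<inter> H) \<union> (A \<inter> E) \<union> (A \<inter> L))" by simp
    also have "\<dots> = prob ((A \<inter> H) \<union> (A \<inter> E)) + prob (A \<inter> L)"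
      by (intro finite_measure_Union) (auto simp: H_def E_def L_def)
    also have "prob ((A \<inter> H) \<union> (A \<inter> E)) = prob (A \<inter> H) + prob (A \<inter> E)"
      by (intro finite_measure_Union) (auto simp: H_def E_def L_def)
    finally show ?thesis .
  qed
  have PEA: "prob (E - A) = p - prob L"
  proof -
    have "prob E = prob (A \<inter> E) + prob (E - A)"
      by (subst finite_measure_Union[symmetric]) (auto intro!: arg_cong[where f=prob])
    then show ?thesis using decomp AHE AL0 PA PH PE by simp
  qed
  have rk0: "rcdf M E K k0 = prob (E - A)"
    unfolding rcdf_def using KA by (intro arg_cong[where f=prob]) (auto simp: E_def not_less)
  define Ls where "Ls = L \<union> (E - A)"
  have [measurable]: "Ls \<in> events" by (simp add: Ls_def)
  have PLs: "prob Ls = p"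
  proof -
    have "prob Ls = prob L + prob (E - A)" unfolding Ls_def
      by (intro finite_measure_Union) (auto simp: E_def L_def)
    then show ?thesis using PEA by simp
  qed
  have sub: "Ls \<subseteq> {\<omega>\<in>space M. ?U \<omega> \<le> p}"
  proof
    fix \<omega> assume \<omega>: "\<omega> \<in> Ls"
    then have sp: "\<omega> \<in> space M" by (auto simp: Ls_def L_def E_def)
    show "\<omega> \<in> {\<omega>\<in>space M. ?U \<omega> \<le> p}"
    proof (cases "\<omega> \<in> L")
      case True
      then have "Z \<omega> < c" by (simp add: L_def)
      then have "measure M {\<omega>'\<in>space M. Z \<omega>' \<le> Z \<omega>} < p"
        using VaR_lt[OF assms(1) p(1)] c by simp
      then show ?thesis using lexU_le[OF assms(1,2), of \<omega>] sp by simp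
    next
      case False
      then have "\<omega> \<in> E - A" using \<omega> by (simp add: Ls_def)
      then have "Z \<omega> = c" "K \<omega> \<le> k0" using KA sp by (auto simp: E_def not_less)
      then have "?U \<omega> = prob L + rcdf M E K (K \<omega>)"
        using lexU_split[OF assms(1,2), of \<omega>] by (simp add: L_def E_def)
      also have "\<dots> \<le> prob L + rcdf M E K k0"
        using rcdf_mono[OF assms(2), of E] \<open>K \<omega> \<le> k0\<close> by simp
      finally show ?thesis using rk0 PEA sp by simp
    qed
  qed
  have "prob ({\<omega>\<in>space M. ?U \<omega> \<le> p} - Ls) = prob {\<omega>\<in>space M. ?U \<omega> \<le> p} - prob Ls"
    using sub by (intro finite_measure_Diff) auto
  also have "\<dots> = 0" using U_exact[OF assms(1-4), of p] p PLs by simp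
  moreover have "{\<omega>\<in>space M. ?U \<omega> \<le> p \<and> \<omega> \<notin> Ls} = {\<omega>\<in>space M. ?U \<omega> \<le> p} - Ls" by auto
  ultimately have "prob {\<omega>\<in>space M. ?U \<omega> \<le> p \<and> \<omega> \<notin> Ls} = 0" by simp
  then have N: "AE \<omega> in M. \<not> (?U \<omega> \<le> p \<and> \<omega> \<notin> Ls)"
    by (intro AE_null_pred) auto
  from N up down AE_space show ?thesis
  proof eventually_elim
    case (elim \<omega>)
    show ?case
    proof
      assume "\<omega> \<in> A"
      then have "\<omega> \<notin> Ls" using elim by (auto simp: Ls_def L_def)
      then show "p < ?U \<omega>" using elim(1) by auto
    next
      assume "p < ?U \<omega>"
      show "\<omega> \<in> A"
      proof (rule ccontr)
        assume nA: "\<omega> \<notin> A"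
        then have "Z \<omega> \<le> c" using elim by auto
        then have "\<omega> \<in> Ls" using nA elim by (auto simp: Ls_def L_def E_def)
        then show False using sub \<open>p < ?U \<omega>\<close> by auto
      qed
    qed
  qed
qed

end

locale L2 = prob_space M for M :: "'a measure" +
  fixes X :: "'a \<Rightarrow> real" and \<gamma> :: "real \<Rightarrow> real" and p x0 q :: real and gX :: "real \<Rightarrow> real"
  assumes p0: "0 < p" and p1: "p < 1"
    and Xm[measurable]: "X \<in> borel_measurable M"
    and Xnn: "\<forall>\<omega>\<in>space M. 0 \<le> X \<omega>"
    and Xatl: "\<And>x. measure M {\<omega>\<in>space M. X \<omega> = x} = 0"
    and gcont: "continuous_on UNIV \<gamma>" and gpos: "\<forall>x. 0 < \<gamma> x"
    and gint: "integrable M (\<lambda>\<omega>. \<gamma> (X \<omega>))"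
    and gE: "integral\<^sup>L M (\<lambda>\<omega>. \<gamma> (X \<omega>)) = 1"
    and gXint: "integrable M (\<lambda>\<omega>. \<gamma> (X \<omega>) * X \<omega>)"
    and x0: "0 \<le> x0" "x0 < integral\<^sup>L M (\<lambda>\<omega>. \<gamma> (X \<omega>) * X \<omega>)"
    and q_def: "q = Inf ((\<lambda>g. VaR M p (\<lambda>\<omega>. g (X \<omega>))) ` Gns M X \<gamma> x0)"
    and gXsol: "gX \<in> Gns M X \<gamma> x0" "VaR M p (\<lambda>\<omega>. gX (X \<omega>)) = q"
    and qpos: "q > 0"
begin

lemma gam_meas[measurable]: "\<gamma> \<in> borel_measurable borel"
  using borel_measurable_continuous_onI[OF gcont] .

lemma prob_mono_AE:
  assumes "AE \<omega> in M. \<omega> \<in> A \<longrightarrow> \<omega> \<in> B" "A \<in> events" "B \<in> events"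
  shows "prob A \<le> prob B"
  using emeasure_mono_AE[OF assms(1,3)] by (simp add: emeasure_eq_measure)

lemma VaR_nonneg:
  assumes [measurable]: "g \<in> borel_measurable borel" and nn: "AE \<omega> in M. 0 \<le> g (X \<omega>)"
  shows "0 \<le> VaR M p (\<lambda>\<omega>. g (X \<omega>))"
  unfolding VaR_def
proof (rule cInf_greatest)
  show "{x. p \<le> prob {\<omega> \<in> space M. g (X \<omega>) \<le> x}} \<noteq> {}"
    using VaR_ne[of "\<lambda>\<omega>. g (X \<omega>)" p] p1 by auto
  fix w assume w: "w \<in> {x. p \<le> prob {\<omega> \<in> space M. g (X \<omega>) \<le> x}}"
  show "0 \<le> w"
  proof (rule ccontr)
    assume "\<not> 0 \<le> w"
    then have "prob {\<omega> \<in> space M. g (X \<omega>) \<le> w} \<le> prob {}"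
      using nn by (intro prob_mono_AE) (auto elim!: eventually_mono)
    then show False using w p0 by simp
  qed
qed

lemma Gns_D:
  assumes "g \<in> Gns M X \<gamma> x0"
  shows "g \<in> borel_measurable borel" "x0 \<le> integral\<^sup>L M (\<lambda>\<omega>. \<gamma> (X \<omega>) * g (X \<omega>))"
    "AE \<omega> in M. 0 \<le> g (X \<omega>) \<and> g (X \<omega>) \<le> X \<omega>"
  using assms by (auto simp: Gns_def)

lemma Q_le:
  assumes "g \<in> Gns M X \<gamma> x0"
  shows "q \<le> VaR M p (\<lambda>\<omega>. g (X \<omega>))"
  unfolding q_def
proof (rule cInf_lower)
  show "VaR M p (\<lambda>\<omega>. g (X \<omega>)) \<in> (\<lambda>g. VaR M p (\<lambda>\<omega>. g (X \<omega>))) ` Gns M X \<gamma> x0"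
    using assms by auto
  show "bdd_below ((\<lambda>g. VaR M p (\<lambda>\<omega>. g (X \<omega>))) ` Gns M X \<gamma> x0)"
  proof (rule bdd_belowI2[of _ 0])
    fix g assume "g \<in> Gns M X \<gamma> x0"
    from Gns_D[OF this] show "0 \<le> VaR M p (\<lambda>\<omega>. g (X \<omega>))"
      by (intro VaR_nonneg) (auto elim!: eventually_mono)
  qed
qed

lemma id_Gns: "(\<lambda>x. x) \<in> Gns M X \<gamma> x0"
  unfolding Gns_def using x0 Xnn by auto

lemma q_le_VaRX: "q \<le> VaR M p X"
  using Q_le[OF id_Gns] by simp

lemma GX_lt: "x < q \<Longrightarrow> prob {\<omega>\<in>space M. X \<omega> \<le> x} < p"
  using VaR_lt[OF Xm p0, of x] q_le_VaRX by simp

lemma PX_less_q: "prob {\<omega>\<in>space M. X \<omega> < q} \<le> p"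
  using less_le_bound[OF Xm, of q p] GX_lt by (meson less_imp_le)

lemma int_g:
  assumes [measurable]: "g \<in> borel_measurable borel" and b: "AE \<omega> in M. 0 \<le> g (X \<omega>) \<and> g (X \<omega>) \<le> X \<omega>"
  shows "integrable M (\<lambda>\<omega>. \<gamma> (X \<omega>) * g (X \<omega>))"
proof (rule Bochner_Integration.integrable_bound[OF gXint])
  show "AE \<omega> in M. norm (\<gamma> (X \<omega>) * g (X \<omega>)) \<le> norm (\<gamma> (X \<omega>) * X \<omega>)"
    using b
  proof eventually_elim
    case (elim \<omega>)
    then show ?case using gpos[rule_format, of "X \<omega>"]
      by (auto simp: abs_mult intro!: mult_left_mono)
  qed
qed measurable

lemma PL:
  assumes [measurable]: "g \<in> borel_measurable borel" and b: "AE \<omega> in M. 0 \<le> g (X \<omega>) \<and> g (X \<omega>) \<le> X \<omega>"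
    and v: "VaR M p (\<lambda>\<omega>. g (X \<omega>)) \<le> q"
    and e: "x0 < integral\<^sup>L M (\<lambda>\<omega>. \<gamma> (X \<omega>) * g (X \<omega>))"
  shows False
proof -
  define I where "I = integral\<^sup>L M (\<lambda>\<omega>. \<gamma> (X \<omega>) * g (X \<omega>))"
  define \<epsilon> where "\<epsilon> = min q (I - x0)"
  have \<epsilon>: "0 < \<epsilon>" "\<epsilon> \<le> q" "\<epsilon> \<le> I - x0" using qpos e by (auto simp: \<epsilon>_def I_def)
  define g' where "g' x = (if g x \<le> q then min (g x) (q - \<epsilon>) else g x)" for x
  have [measurable]: "g' \<in> borel_measurable borel" unfolding g'_def by measurable
  have b': "AE \<omega> in M. 0 \<le> g' (X \<omega>) \<and> g' (X \<omega>) \<le> X \<omega>"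
    using b by eventually_elim (use \<epsilon> in \<open>auto simp: g'_def\<close>)
  have pw: "\<gamma> (X \<omega>) * g (X \<omega>) - \<epsilon> * \<gamma> (X \<omega>) \<le> \<gamma> (X \<omega>) * g' (X \<omega>)" for \<omega>
  proof -
    have "g (X \<omega>) - \<epsilon> \<le> g' (X \<omega>)" using \<epsilon> by (auto simp: g'_def)
    then have "\<gamma> (X \<omega>) * (g (X \<omega>) - \<epsilon>) \<le> \<gamma> (X \<omega>) * g' (X \<omega>)"
      using gpos by (intro mult_left_mono) (auto simp: less_imp_le)
    then show ?thesis by (simp add: algebra_simps)
  qed
  have "x0 \<le> I - \<epsilon>" using \<epsilon> by simp
  also have "I - \<epsilon> = integral\<^sup>L M (\<lambda>\<omega>. \<gamma> (X \<omega>) * g (X \<omega>) - \<epsilon> * \<gamma> (X \<omega>))"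
    using int_g[OF assms(1) b] gint gE by (simp add: I_def)
  also have "\<dots> \<le> integral\<^sup>L M (\<lambda>\<omega>. \<gamma> (X \<omega>) * g' (X \<omega>))"
    using int_g[OF assms(1) b] gint int_g[of g' , OF _ b'] pw by (intro integral_mono) auto
  finally have "g' \<in> Gns M X \<gamma> x0" using b' by (auto simp: Gns_def)
  then have qle: "q \<le> VaR M p (\<lambda>\<omega>. g' (X \<omega>))" by (rule Q_le)
  have "VaR M p (\<lambda>\<omega>. g (X \<omega>)) \<le> q" by (rule v)
  have "p \<le> prob {\<omega>\<in>space M. g (X \<omega>) \<le> VaR M p (\<lambda>\<omega>. g (X \<omega>))}"
    using VaR_ge[of "\<lambda>\<omega>. g (X \<omega>)" p] p0 p1 by simp
  also have "\<dots> \<le> prob {\<omega>\<in>space M. g (X \<omega>) \<le> q}"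
    using v by (intro finite_measure_mono) auto
  also have "\<dots> \<le> prob {\<omega>\<in>space M. g' (X \<omega>) \<le> q - \<epsilon>}"
    by (intro finite_measure_mono) (auto simp: g'_def)
  finally have "VaR M p (\<lambda>\<omega>. g' (X \<omega>)) \<le> q - \<epsilon>"
    using VaR_le[of "\<lambda>\<omega>. g' (X \<omega>)" p] p0 by simp
  then show False using qle \<epsilon> by simp
qed

lemma part_i: "integral\<^sup>L M (\<lambda>\<omega>. \<gamma> (X \<omega>) * gX (X \<omega>)) = x0"
proof -
  note G = Gns_D[OF gXsol(1)]
  show ?thesis
  proof (rule ccontr)
    assume "integral\<^sup>L M (\<lambda>\<omega>. \<gamma> (X \<omega>) * gX (X \<omega>)) \<noteq> x0"
    then have "x0 < integral\<^sup>L M (\<lambda>\<omega>. \<gamma> (X \<omega>) * gX (X \<omega>))" using G(2) by simp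
    then show False using PL[OF G(1) G(3)] gXsol(2) by simp
  qed
qed

lemma part_ii:
  assumes [measurable]: "g \<in> borel_measurable borel" and A[measurable]: "A \<in> events" and PA: "prob A = 1 - p"
    and eq: "AE \<omega> in M. g (X \<omega>) = (if \<omega> \<in> A then X \<omega> else min (X \<omega>) q)"
  shows "VaR M p (\<lambda>\<omega>. g (X \<omega>)) = q"
proof (rule antisym)
  have "p = prob (space M - A)" using PA prob_compl[OF A] by simp
  also have "\<dots> \<le> prob {\<omega>\<in>space M. g (X \<omega>) \<le> q}"
    using eq by (intro prob_mono_AE) (auto elim!: eventually_mono)
  finally show "VaR M p (\<lambda>\<omega>. g (X \<omega>)) \<le> q"
    using VaR_le[of "\<lambda>\<omega>. g (X \<omega>)" p q] p0 by simp
  show "q \<le> VaR M p (\<lambda>\<omega>. g (X \<omega>))"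
    unfolding VaR_def
  proof (rule cInf_greatest)
    show "{x. p \<le> prob {\<omega> \<in> space M. g (X \<omega>) \<le> x}} \<noteq> {}"
      using VaR_ne[of "\<lambda>\<omega>. g (X \<omega>)" p] p1 by auto
    fix w assume w: "w \<in> {x. p \<le> prob {\<omega> \<in> space M. g (X \<omega>) \<le> x}}"
    show "q \<le> w"
    proof (rule ccontr)
      assume "\<not> q \<le> w"
      then have wq: "w < q" by simp
      have "prob {\<omega> \<in> space M. g (X \<omega>) \<le> w} \<le> prob {\<omega> \<in> space M. X \<omega> \<le> w}"
      proof (rule prob_mono_AE)
        show "AE \<omega> in M. \<omega> \<in> {\<omega> \<in> space M. g (X \<omega>) \<le> w} \<longrightarrow> \<omega> \<in> {\<omega> \<in> space M. X \<omega> \<le> w}"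
          using eq
        proof eventually_elim
          case (elim \<omega>) then show ?case using wq by (auto split: if_splits simp: min_def)
        qed
      qed auto
      then show False using w GX_lt[OF wq] by simp
    qed
  qed
qed

end

context L2
begin

lemma subalg: "subalgebra M (sigmaX M X)"
  unfolding subalgebra_def sigmaX_def
  using sets_image_in_sets[where N=M and f=X and M=borel and X="space M"] by auto

lemma sigmaX_sets: "A \<in> sets (sigmaX M X) \<longleftrightarrow> (\<exists>S\<in>sets borel. A = X -` S \<inter> space M)"
proof -
  have "X \<in> space M \<rightarrow> space borel" by simp
  from sets_vimage_algebra2[OF this] show ?thesis unfolding sigmaX_def by auto
qed

lemma sigmaX_in: "S \<in> sets borel \<Longrightarrow> X -` S \<inter> space M \<in> sets (sigmaX M X)"
  using sigmaX_sets by auto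

lemma cut:
  assumes [measurable]: "SE \<in> sets borel" and m: "0 \<le> m" "m \<le> prob (X -` SE \<inter> space M)"
  shows "\<exists>SE'\<in>sets borel. SE' \<subseteq> SE \<and> prob (X -` SE' \<inter> space M) = m"
proof -
  consider "m = 0" | "m = prob (X -` SE \<inter> space M)" | "0 < m" "m < prob (X -` SE \<inter> space M)"
    using m by linarith
  then show ?thesis
  proof cases
    case 1 then show ?thesis by (intro bexI[of _ "{}"]) auto
  next
    case 2 then show ?thesis by (intro bexI[of _ SE]) auto
  next
    case 3
    have E[measurable]: "X -` SE \<inter> space M \<in> events" by measurable
    obtain t where t: "rcdf M (X -` SE \<inter> space M) X t = m"
      using rcdf_IVT[OF Xm E Xatl 3] by auto
    have "X -` (SE \<inter> {..t}) \<inter> space M = {\<omega>\<in>space M. \<omega> \<in> X -` SE \<inter> space M \<and> X \<omega> \<le> t}" by auto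
    then have "prob (X -` (SE \<inter> {..t}) \<inter> space M) = m" using t by (simp add: rcdf_def)
    then show ?thesis by (intro bexI[of _ "SE \<inter> {..t}"]) auto
  qed
qed

lemma objA_eq:
  "objA M X \<gamma> q (X -` S \<inter> space M) = integral\<^sup>L M (\<lambda>\<omega>. \<gamma> (X \<omega>) * (if X \<omega> \<in> S then X \<omega> else min (X \<omega>) q))"
  unfolding objA_def by (intro Bochner_Integration.integral_cong) auto

definition gS :: "real set \<Rightarrow> real \<Rightarrow> real" where
  "gS S x = (if x \<in> S then x else min x q)"

lemma gS_meas[measurable]:
  assumes [measurable]: "S \<in> sets borel" shows "gS S \<in> borel_measurable borel"
  unfolding gS_def by measurable

lemma gS_bounds: "AE \<omega> in M. 0 \<le> gS S (X \<omega>) \<and> gS S (X \<omega>) \<le> X \<omega>"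
  using Xnn qpos by (intro AE_I2) (auto simp: gS_def)

lemma gS_VaR:
  assumes [measurable]: "S \<in> sets borel" and P: "prob (X -` S \<inter> space M) = 1 - p"
  shows "VaR M p (\<lambda>\<omega>. gS S (X \<omega>)) = q"
  by (rule part_ii[OF gS_meas[OF assms(1)] _ P]) (auto simp: gS_def intro!: AE_I2)

lemma objA_gS: "objA M X \<gamma> q (X -` S \<inter> space M) = integral\<^sup>L M (\<lambda>\<omega>. \<gamma> (X \<omega>) * gS S (X \<omega>))"
  unfolding objA_eq gS_def by simp

lemma gS_obj_le:
  assumes [measurable]: "S \<in> sets borel" and P: "prob (X -` S \<inter> space M) = 1 - p"
  shows "objA M X \<gamma> q (X -` S \<inter> space M) \<le> x0"
proof (rule ccontr)
  assume "\<not> ?thesis"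
  then have "x0 < integral\<^sup>L M (\<lambda>\<omega>. \<gamma> (X \<omega>) * gS S (X \<omega>))" by (simp add: objA_gS)
  from PL[OF gS_meas[OF assms(1)] gS_bounds _ this] gS_VaR[OF assms] show False by simp
qed

lemma part_iii:
  "\<exists>SA\<in>sets borel. prob (X -` SA \<inter> space M) = 1 - p \<and>
     (AE \<omega> in M. gX (X \<omega>) = gS SA (X \<omega>))"
proof -
  note G = Gns_D[OF gXsol(1)]
  have [measurable]: "gX \<in> borel_measurable borel" using G(1) .
  define S0 where "S0 = {x. gX x \<le> q}"
  have [measurable]: "S0 \<in> sets borel" unfolding S0_def by measurable
  define B where "B = X -` S0 \<inter> space M"
  have [measurable]: "B \<in> events" unfolding B_def by measurable
  have PB: "p \<le> prob B"
  proof -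
    have "p \<le> prob {\<omega>\<in>space M. gX (X \<omega>) \<le> VaR M p (\<lambda>\<omega>. gX (X \<omega>))}"
      using VaR_ge[of "\<lambda>\<omega>. gX (X \<omega>)" p] p0 p1 by simp
    also have "\<dots> = prob B" using gXsol(2) by (auto simp: B_def S0_def intro!: arg_cong[where f=prob])
    finally show ?thesis .
  qed
  obtain S1 where S1[measurable]: "S1 \<in> sets borel" and S1sub: "S1 \<subseteq> S0"
    and PS1: "prob (X -` S1 \<inter> space M) = prob B - p"
    using cut[of S0 "prob B - p"] PB p0 by (auto simp: B_def)
  define SA where "SA = - S0 \<union> S1"
  have [measurable]: "SA \<in> sets borel" unfolding SA_def by measurable
  have PA: "prob (X -` SA \<inter> space M) = 1 - p"
  proof -
    have "X -` SA \<inter> space M = (space M - B) \<union> (X -` S1 \<inter> space M)"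
      by (auto simp: SA_def B_def)
    also have "prob \<dots> = prob (space M - B) + prob (X -` S1 \<inter> space M)"
      using S1sub by (intro finite_measure_Union) (auto simp: B_def)
    also have "\<dots> = 1 - p" using PS1 prob_compl[of B] by simp
    finally show ?thesis .
  qed
  have le: "AE \<omega> in M. gX (X \<omega>) \<le> gS SA (X \<omega>)"
    using G(3)
  proof eventually_elim
    case (elim \<omega>) then show ?case by (auto simp: gS_def SA_def S0_def)
  qed
  have int1: "integrable M (\<lambda>\<omega>. \<gamma> (X \<omega>) * gX (X \<omega>))" using int_g[OF _ G(3)] by simp
  have int2: "integrable M (\<lambda>\<omega>. \<gamma> (X \<omega>) * gS SA (X \<omega>))" using int_g[OF _ gS_bounds] by simp
  have "x0 = integral\<^sup>L M (\<lambda>\<omega>. \<gamma> (X \<omega>) * gX (X \<omega>))" using part_i by simp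
  also have "\<dots> \<le> integral\<^sup>L M (\<lambda>\<omega>. \<gamma> (X \<omega>) * gS SA (X \<omega>))"
    using int1 int2 le
    by (intro integral_mono_AE) (auto elim!: eventually_mono intro!: mult_left_mono simp: gpos less_imp_le)
  finally have "x0 \<le> integral\<^sup>L M (\<lambda>\<omega>. \<gamma> (X \<omega>) * gS SA (X \<omega>))" .
  moreover have "integral\<^sup>L M (\<lambda>\<omega>. \<gamma> (X \<omega>) * gS SA (X \<omega>)) \<le> x0"
    using gS_obj_le[of SA] PA by (simp add: objA_gS)
  ultimately have eqI: "integral\<^sup>L M (\<lambda>\<omega>. \<gamma> (X \<omega>) * gS SA (X \<omega>)) = integral\<^sup>L M (\<lambda>\<omega>. \<gamma> (X \<omega>) * gX (X \<omega>))"
    using part_i by simp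
  have "integral\<^sup>L M (\<lambda>\<omega>. \<gamma> (X \<omega>) * gS SA (X \<omega>) - \<gamma> (X \<omega>) * gX (X \<omega>)) = 0"
    using int1 int2 eqI by simp
  then have "AE \<omega> in M. \<gamma> (X \<omega>) * gS SA (X \<omega>) - \<gamma> (X \<omega>) * gX (X \<omega>) = 0"
    using int1 int2 le
    by (subst (asm) integral_nonneg_eq_0_iff_AE)
       (auto elim!: eventually_mono intro!: mult_left_mono simp: gpos less_imp_le)
  then have "AE \<omega> in M. gX (X \<omega>) = gS SA (X \<omega>)"
  proof eventually_elim
    case (elim \<omega>)
    then have "\<gamma> (X \<omega>) * (gS SA (X \<omega>) - gX (X \<omega>)) = 0" by (simp add: algebra_simps)
    then show ?case using gpos by (metis eq_iff_diff_eq_0 less_irrefl mult_eq_0_iff)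
  qed
  then show ?thesis using PA by (intro bexI[of _ SA]) auto
qed

lemma sol_opt:
  assumes [measurable]: "SA \<in> sets borel" and PA: "prob (X -` SA \<inter> space M) = 1 - p"
    and eq: "AE \<omega> in M. gX (X \<omega>) = gS SA (X \<omega>)"
  shows "\<forall>B\<in>sets (sigmaX M X). prob B = 1 - p \<longrightarrow> objA M X \<gamma> q B \<le> objA M X \<gamma> q (X -` SA \<inter> space M)"
proof (intro ballI impI)
  have [measurable]: "gX \<in> borel_measurable borel" using Gns_D(1)[OF gXsol(1)] .
  fix B assume "B \<in> sets (sigmaX M X)" and PB: "prob B = 1 - p"
  then obtain SB where SB[measurable]: "SB \<in> sets borel" and Beq: "B = X -` SB \<inter> space M"
    using sigmaX_sets by auto
  have "objA M X \<gamma> q B \<le> x0" using gS_obj_le[OF SB] PB Beq by simp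
  also have "x0 = integral\<^sup>L M (\<lambda>\<omega>. \<gamma> (X \<omega>) * gX (X \<omega>))" using part_i by simp
  also have "\<dots> = objA M X \<gamma> q (X -` SA \<inter> space M)"
    unfolding objA_gS using eq by (intro integral_cong_AE) (auto elim!: eventually_mono)
  finally show "objA M X \<gamma> q B \<le> objA M X \<gamma> q (X -` SA \<inter> space M)" .
qed

end

context L2
begin

definition zf :: "real \<Rightarrow> real" where "zf x = (x - q) * \<gamma> x"
definition Wf :: "real \<Rightarrow> real" where "Wf x = \<gamma> x * (x - min x q)"

lemma zf_meas[measurable]: "zf \<in> borel_measurable borel" unfolding zf_def by measurable
lemma Wf_meas[measurable]: "Wf \<in> borel_measurable borel" unfolding Wf_def by measurable

lemma Wf_max: "Wf x = max (zf x) 0"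
proof -
  have g: "0 < \<gamma> x" using gpos by simp
  show ?thesis
  proof (cases "x \<le> q")
    case True
    then have "(x - q) * \<gamma> x \<le> 0" using g by (simp add: mult_nonpos_nonneg)
    then show ?thesis using True by (simp add: Wf_def zf_def min_def max_def)
  next
    case False
    then have "0 \<le> (x - q) * \<gamma> x" using g by simp
    then show ?thesis using False by (simp add: Wf_def zf_def min_def max_def mult.commute)
  qed
qed

lemma Wf_bounds: "0 \<le> x \<Longrightarrow> 0 \<le> Wf x \<and> Wf x \<le> \<gamma> x * x"
  using gpos[rule_format, of x] qpos
  by (auto simp: Wf_def min_def intro!: mult_left_mono mult_nonneg_nonneg)

lemma int_min: "integrable M (\<lambda>\<omega>. \<gamma> (X \<omega>) * min (X \<omega>) q)"
  using int_g[of "\<lambda>x. min x q"] Xnn qpos by (auto intro!: AE_I2)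

lemma int_W: "S \<in> sets borel \<Longrightarrow> integrable M (\<lambda>\<omega>. indicator S (X \<omega>) * Wf (X \<omega>))"
proof (rule Bochner_Integration.integrable_bound[OF gXint])
  assume [measurable]: "S \<in> sets borel"
  show "(\<lambda>\<omega>. indicator S (X \<omega>) * Wf (X \<omega>)) \<in> borel_measurable M" by measurable
  show "AE \<omega> in M. norm (indicator S (X \<omega>) * Wf (X \<omega>)) \<le> norm (\<gamma> (X \<omega>) * X \<omega>)"
  proof (intro AE_I2)
    fix \<omega> assume "\<omega> \<in> space M"
    then have "0 \<le> X \<omega>" using Xnn by auto
    then show "norm (indicator S (X \<omega>) * Wf (X \<omega>)) \<le> norm (\<gamma> (X \<omega>) * X \<omega>)"
      using Wf_bounds[of "X \<omega>"] gpos by (auto simp: indicator_def)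
  qed
qed

lemma int_ind_int: "S \<in> sets borel \<Longrightarrow> integrable M (\<lambda>\<omega>. indicator S (X \<omega>) :: real)"
  by (intro integrable_const_bound[where B=1]) (auto simp: indicator_def)

lemma int_ind: "integral\<^sup>L M (\<lambda>\<omega>. indicator S (X \<omega>) :: real) = prob (X -` S \<inter> space M)"
proof -
  have "integral\<^sup>L M (\<lambda>\<omega>. indicator S (X \<omega>) :: real) = integral\<^sup>L M (indicator (X -` S \<inter> space M))"
    by (intro Bochner_Integration.integral_cong) (auto simp: indicator_def)
  then show ?thesis by simp
qed

lemma objA_dec:
  assumes [measurable]: "S \<in> sets borel"
  shows "objA M X \<gamma> q (X -` S \<inter> space M) = integral\<^sup>L M (\<lambda>\<omega>. \<gamma> (X \<omega>) * min (X \<omega>) q)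
          + integral\<^sup>L M (\<lambda>\<omega>. indicator S (X \<omega>) * Wf (X \<omega>))"
proof -
  have "objA M X \<gamma> q (X -` S \<inter> space M) = integral\<^sup>L M (\<lambda>\<omega>. \<gamma> (X \<omega>) * min (X \<omega>) q + indicator S (X \<omega>) * Wf (X \<omega>))"
    unfolding objA_eq by (intro Bochner_Integration.integral_cong) (auto simp: Wf_def algebra_simps)
  also have "\<dots> = integral\<^sup>L M (\<lambda>\<omega>. \<gamma> (X \<omega>) * min (X \<omega>) q) + integral\<^sup>L M (\<lambda>\<omega>. indicator S (X \<omega>) * Wf (X \<omega>))"
    using int_min int_W[OF assms] by (rule Bochner_Integration.integral_add)
  finally show ?thesis .
qed

lemma int_W_lower:
  assumes [measurable]: "S \<in> sets borel" and b: "\<And>x. x \<in> S \<Longrightarrow> 0 \<le> x \<Longrightarrow> a \<le> Wf x"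
  shows "a * prob (X -` S \<inter> space M) \<le> integral\<^sup>L M (\<lambda>\<omega>. indicator S (X \<omega>) * Wf (X \<omega>))"
proof -
  have "a * prob (X -` S \<inter> space M) = integral\<^sup>L M (\<lambda>\<omega>. a * indicator S (X \<omega>))"
    using int_ind[of S] by simp
  also have "\<dots> \<le> integral\<^sup>L M (\<lambda>\<omega>. indicator S (X \<omega>) * Wf (X \<omega>))"
  proof (rule integral_mono)
    show "integrable M (\<lambda>\<omega>. a * indicator S (X \<omega>))"
      using int_ind_int[OF assms(1)] by (intro integrable_mult_right)
  qed (use int_W[OF assms(1)] b Xnn in \<open>auto simp: indicator_def\<close>)
  finally show ?thesis .
qed

lemma int_W_upper:
  assumes [measurable]: "S \<in> sets borel" and b: "\<And>x. x \<in> S \<Longrightarrow> 0 \<le> x \<Longrightarrow> Wf x \<le> a"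
  shows "integral\<^sup>L M (\<lambda>\<omega>. indicator S (X \<omega>) * Wf (X \<omega>)) \<le> a * prob (X -` S \<inter> space M)"
proof -
  have "integral\<^sup>L M (\<lambda>\<omega>. indicator S (X \<omega>) * Wf (X \<omega>)) \<le> integral\<^sup>L M (\<lambda>\<omega>. a * indicator S (X \<omega>))"
  proof (rule integral_mono)
    show "integrable M (\<lambda>\<omega>. a * indicator S (X \<omega>))"
      using int_ind_int[OF assms(1)] by (intro integrable_mult_right)
  qed (use int_W[OF assms(1)] b Xnn in \<open>auto simp: indicator_def\<close>)
  also have "\<dots> = a * prob (X -` S \<inter> space M)"
    using int_ind[of S] by simp
  finally show ?thesis .
qed

end

context L2
begin

lemma pos_union:
  assumes [measurable]: "\<And>n::nat. T n \<in> sets borel" and U: "(\<Union>n. T n) = T0"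
    and pos: "0 < prob (X -` T0 \<inter> space M)"
  shows "\<exists>n. 0 < prob (X -` T n \<inter> space M)"
proof (rule ccontr)
  assume "\<not> ?thesis"
  then have z: "prob (X -` T n \<inter> space M) = 0" for n using measure_nonneg[of M] by (meson not_less order.antisym)
  have "X -` T n \<inter> space M \<in> null_sets M" for n
    using z[of n] by (auto simp: null_sets_def emeasure_eq_measure)
  then have "(\<Union>n. X -` T n \<inter> space M) \<in> null_sets M" by (rule null_sets_UN)
  moreover have "(\<Union>n. X -` T n \<inter> space M) = X -` T0 \<inter> space M" using U by auto
  ultimately show False using pos by (simp add: null_sets_def emeasure_eq_measure)
qed

lemma exch:
  assumes [measurable]: "SA \<in> sets borel" "S1 \<in> sets borel" "S2 \<in> sets borel"
    and sub: "S1 \<subseteq> SA" and dis: "S2 \<inter> SA = {}"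
    and m1: "prob (X -` S1 \<inter> space M) = m" and m2: "prob (X -` S2 \<inter> space M) = m" and m: "0 < m"
    and a: "a1 < a2"
    and b1: "\<And>x. x \<in> S1 \<Longrightarrow> 0 \<le> x \<Longrightarrow> Wf x \<le> a1"
    and b2: "\<And>x. x \<in> S2 \<Longrightarrow> 0 \<le> x \<Longrightarrow> a2 \<le> Wf x"
  shows "objA M X \<gamma> q (X -` SA \<inter> space M) < objA M X \<gamma> q (X -` ((SA - S1) \<union> S2) \<inter> space M)"
    and "prob (X -` ((SA - S1) \<union> S2) \<inter> space M) = prob (X -` SA \<inter> space M)"
proof -
  let ?I = "\<lambda>S. integral\<^sup>L M (\<lambda>\<omega>. indicator S (X \<omega>) * Wf (X \<omega>))"
  have "?I ((SA - S1) \<union> S2) = integral\<^sup>L M (\<lambda>\<omega>. indicator SA (X \<omega>) * Wf (X \<omega>) - indicator S1 (X \<omega>) * Wf (X \<omega>) + indicator S2 (X \<omega>) * Wf (X \<omega>))"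
    using sub dis by (intro Bochner_Integration.integral_cong) (auto simp: indicator_def)
  also have "\<dots> = ?I SA - ?I S1 + ?I S2"
    using int_W[of SA] int_W[of S1] int_W[of S2] by simp
  finally have eq: "?I ((SA - S1) \<union> S2) = ?I SA - ?I S1 + ?I S2" .
  have "?I S1 \<le> a1 * m" using int_W_upper[of S1 a1] b1 m1 by simp
  moreover have "a2 * m \<le> ?I S2" using int_W_lower[of S2 a2] b2 m2 by simp
  moreover have "a1 * m < a2 * m" using a m by simp
  ultimately have lt: "?I SA < ?I ((SA - S1) \<union> S2)" using eq by simp
  have o1: "objA M X \<gamma> q (X -` SA \<inter> space M) = integral\<^sup>L M (\<lambda>\<omega>. \<gamma> (X \<omega>) * min (X \<omega>) q) + ?I SA"
    by (rule objA_dec) simp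
  have o2: "objA M X \<gamma> q (X -` ((SA - S1) \<union> S2) \<inter> space M) = integral\<^sup>L M (\<lambda>\<omega>. \<gamma> (X \<omega>) * min (X \<omega>) q) + ?I ((SA - S1) \<union> S2)"
    by (rule objA_dec) simp
  show "objA M X \<gamma> q (X -` SA \<inter> space M) < objA M X \<gamma> q (X -` ((SA - S1) \<union> S2) \<inter> space M)"
    unfolding o1 o2 using lt by simp
  have "X -` ((SA - S1) \<union> S2) \<inter> space M = (X -` SA \<inter> space M - X -` S1 \<inter> space M) \<union> (X -` S2 \<inter> space M)" by auto
  also have "prob \<dots> = prob (X -` SA \<inter> space M - X -` S1 \<inter> space M) + prob (X -` S2 \<inter> space M)"
    using dis by (intro finite_measure_Union) auto
  also have "prob (X -` SA \<inter> space M - X -` S1 \<inter> space M) = prob (X -` SA \<inter> space M) - m"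
    using sub m1 by (subst finite_measure_Diff) auto
  finally show "prob (X -` ((SA - S1) \<union> S2) \<inter> space M) = prob (X -` SA \<inter> space M)" using m2 by simp
qed

lemma zf_cont: "isCont zf x"
proof -
  have "continuous_on UNIV zf" unfolding zf_def by (intro continuous_intros gcont)
  then show ?thesis by (simp add: continuous_on_eq_continuous_at)
qed

lemma zf_q: "zf q = 0" by (simp add: zf_def)

lemma zf_nonneg: "q \<le> x \<Longrightarrow> 0 \<le> zf x"
  using gpos by (simp add: zf_def less_imp_le)

lemma zf_neg_iff: "zf x < 0 \<longleftrightarrow> x < q"
  using gpos[rule_format, of x] by (auto simp: zf_def mult_less_0_iff)

lemma zf_pos_iff: "0 < zf x \<longleftrightarrow> q < x"
  using gpos[rule_format, of x] by (auto simp: zf_def zero_less_mult_iff)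

lemma Zm[measurable]: "(\<lambda>\<omega>. zf (X \<omega>)) \<in> borel_measurable M" by measurable

abbreviation "cc \<equiv> VaR M p (\<lambda>\<omega>. zf (X \<omega>))"

lemma c_nonneg: "0 \<le> cc"
proof (rule ccontr)
  assume "\<not> 0 \<le> cc"
  then have c: "cc < 0" by simp
  obtain \<eta> where \<eta>: "0 < \<eta>" and h: "\<And>y. y \<noteq> q \<Longrightarrow> \<bar>y - q\<bar> < \<eta> \<Longrightarrow> \<bar>zf y - zf q\<bar> < - cc"
    using zf_cont[of q] c unfolding isCont_def LIM_eq by (auto simp: dist_real_def) (meson neg_0_less_iff_less)
  have "p \<le> prob {\<omega>\<in>space M. zf (X \<omega>) \<le> cc}" using VaR_ge[OF Zm p0 p1] .
  also have "\<dots> \<le> prob {\<omega>\<in>space M. X \<omega> \<le> q - \<eta>}"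
  proof (intro finite_measure_mono subsetI)
    fix \<omega> assume "\<omega> \<in> {\<omega>\<in>space M. zf (X \<omega>) \<le> cc}"
    then have sp: "\<omega> \<in> space M" and z: "zf (X \<omega>) \<le> cc" by auto
    have "X \<omega> < q" using zf_nonneg[of "X \<omega>"] z c by (meson linorder_not_le order_le_less_trans not_less)
    moreover have "\<not> (q - \<eta> < X \<omega>)"
    proof
      assume "q - \<eta> < X \<omega>"
      then have "\<bar>zf (X \<omega>) - zf q\<bar> < - cc" using h[of "X \<omega>"] \<open>X \<omega> < q\<close> by auto
      then show False using z zf_q by simp
    qed
    ultimately show "\<omega> \<in> {\<omega>\<in>space M. X \<omega> \<le> q - \<eta>}" using sp by auto
  qed simp
  also have "\<dots> < p" using GX_lt[of "q - \<eta>"] \<eta> by simp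
  finally show False by simp
qed

end

context L2
begin

abbreviation "PX S \<equiv> prob (X -` S \<inter> space M)"

lemma PX_Un: "S \<in> sets borel \<Longrightarrow> T \<in> sets borel \<Longrightarrow> S \<inter> T = {} \<Longrightarrow> PX (S \<union> T) = PX S + PX T"
  by (subst vimage_Un, subst Int_Un_distrib2, rule finite_measure_Union) auto

lemma PX_Diff:
  assumes [measurable]: "S \<in> sets borel" "T \<in> sets borel" and "T \<subseteq> S"
  shows "PX (S - T) = PX S - PX T"
proof -
  have "X -` (S - T) \<inter> space M = (X -` S \<inter> space M) - (X -` T \<inter> space M)" by auto
  then show ?thesis using assms(3) by (simp only:) (rule finite_measure_Diff, auto)
qed

lemma PX_Diff2:
  assumes [measurable]: "S \<in> sets borel" "T \<in> sets borel"
  shows "PX (S - T) = PX S - PX (T \<inter> S)"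
proof -
  have "S - T = S - (T \<inter> S)" by auto
  then have "PX (S - T) = PX (S - (T \<inter> S))" by (simp only:)
  also have "\<dots> = PX S - PX (T \<inter> S)" by (rule PX_Diff) auto
  finally show ?thesis .
qed

lemma PX_mono: "S \<in> sets borel \<Longrightarrow> T \<subseteq> S \<Longrightarrow> PX T \<le> PX S"
  by (intro finite_measure_mono) auto

lemma PX_UNIV: "PX UNIV = 1" by (simp add: prob_space)

lemma PX_set: "prob {\<omega>\<in>space M. P (X \<omega>)} = PX {x. P x}"
  by (intro arg_cong[where f=prob]) auto

lemma struct:
  assumes [measurable]: "SA \<in> sets borel" and PA: "PX SA = 1 - p"
    and opt: "\<forall>B\<in>sets (sigmaX M X). prob B = 1 - p \<longrightarrow> objA M X \<gamma> q B \<le> objA M X \<gamma> q (X -` SA \<inter> space M)"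
  shows "AE \<omega> in M. cc < zf (X \<omega>) \<longrightarrow> X \<omega> \<in> SA" and "AE \<omega> in M. X \<omega> \<in> SA \<longrightarrow> cc \<le> zf (X \<omega>)"
proof -
  define SH where "SH = {x. cc < zf x}"
  define SL where "SL = {x. zf x < cc}"
  have [measurable]: "SH \<in> sets borel" "SL \<in> sets borel" unfolding SH_def SL_def by measurable
  have c0: "0 \<le> cc" by (rule c_nonneg)
  have Gc: "p \<le> PX {x. zf x \<le> cc}" using VaR_ge[OF Zm p0 p1] PX_set[of "\<lambda>x. zf x \<le> cc"] by simp
  have PSH: "PX SH = 1 - PX {x. zf x \<le> cc}"
    using PX_Diff[of UNIV "{x. zf x \<le> cc}"] PX_UNIV by (simp add: SH_def set_diff_eq not_le)
  have PSL: "PX SL \<le> p" using VaR_less[OF Zm p0] PX_set[of "\<lambda>x. zf x < cc"] by (simp add: SL_def)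
  have noimp: False if B: "SB \<in> sets borel" "PX SB = 1 - p" "objA M X \<gamma> q (X -` SA \<inter> space M) < objA M X \<gamma> q (X -` SB \<inter> space M)" for SB
    using opt[rule_format, OF sigmaX_in[OF B(1)] B(2)] B(3) by simp
  have P1: "PX (SH - SA) = 0"
  proof (rule ccontr)
    assume "PX (SH - SA) \<noteq> 0"
    then have pos: "0 < PX (SH - SA)" using measure_nonneg[of M] by (simp add: less_le)
    have "\<exists>n. 0 < PX ({x. cc + inverse (real (Suc n)) < zf x} - SA)"
    proof (rule pos_union[OF _ _ pos])
      show "(\<Union>n. {x. cc + inverse (real (Suc n)) < zf x} - SA) = SH - SA"
      proof
        show "(\<Union>n. {x. cc + inverse (real (Suc n)) < zf x} - SA) \<subseteq> SH - SA"
        proof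
          fix x assume "x \<in> (\<Union>n. {x. cc + inverse (real (Suc n)) < zf x} - SA)"
          then obtain n where h: "cc + inverse (real (Suc n)) < zf x" "x \<notin> SA" by auto
          have i: "0 < inverse (real (Suc n))" by simp
          have "cc < zf x" using h(1) i by linarith
          then show "x \<in> SH - SA" using h(2) by (simp add: SH_def)
        qed
        show "SH - SA \<subseteq> (\<Union>n. {x. cc + inverse (real (Suc n)) < zf x} - SA)"
        proof
          fix x assume x: "x \<in> SH - SA"
          then obtain n where "inverse (real (Suc n)) < zf x - cc" using reals_Archimedean[of "zf x - cc"] by (auto simp: SH_def)
          then have "cc + inverse (real (Suc n)) < zf x" by linarith
          then show "x \<in> (\<Union>n. {x. cc + inverse (real (Suc n)) < zf x} - SA)" using x by blast
        qed
      qed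
    qed measurable
    then obtain n where posn: "0 < PX ({x. cc + inverse (real (Suc n)) < zf x} - SA)" by auto
    define \<delta> where "\<delta> = inverse (real (Suc n))"
    have \<delta>: "0 < \<delta>" by (simp add: \<delta>_def)
    define S2 where "S2 = {x. cc + \<delta> < zf x} - SA"
    define m where "m = PX S2"
    have [measurable]: "S2 \<in> sets borel" unfolding S2_def by measurable
    define S1f where "S1f = SA \<inter> {x. zf x \<le> cc}"
    have [measurable]: "S1f \<in> sets borel" unfolding S1f_def by measurable
    have "SA = S1f \<union> (SA \<inter> SH)" by (auto simp: S1f_def SH_def)
    then have "PX SA = PX (S1f \<union> (SA \<inter> SH))" by simp
    also have "\<dots> = PX S1f + PX (SA \<inter> SH)" by (rule PX_Un) (auto simp: S1f_def SH_def)
    finally have "PX SA = PX S1f + PX (SA \<inter> SH)" .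
    moreover have "m \<le> PX (SH - SA)" unfolding m_def S2_def using \<delta>
      by (intro PX_mono) (auto simp: SH_def)
    moreover have "PX (SH - SA) = PX SH - PX (SA \<inter> SH)"
      by (rule PX_Diff2) auto
    ultimately have mle: "m \<le> PX S1f" using PSH Gc PA by simp
    have m0: "0 < m" using posn by (simp add: m_def S2_def \<delta>_def)
    obtain S1 where [measurable]: "S1 \<in> sets borel" and S1sub: "S1 \<subseteq> S1f" and PS1: "PX S1 = m"
      using cut[of S1f m] mle m0 by auto
    have h1: "S1 \<subseteq> SA" using S1sub by (auto simp: S1f_def)
    have h2: "S2 \<inter> SA = {}" by (auto simp: S2_def)
    have h3: "\<And>x. x \<in> S1 \<Longrightarrow> 0 \<le> x \<Longrightarrow> Wf x \<le> cc"
      using S1sub c0 by (auto simp: S1f_def Wf_max)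
    have h4: "\<And>x. x \<in> S2 \<Longrightarrow> 0 \<le> x \<Longrightarrow> cc + \<delta> \<le> Wf x"
      by (auto simp: S2_def Wf_max)
    have h5: "PX S2 = m" by (simp add: m_def)
    have h6: "cc < cc + \<delta>" using \<delta> by simp
    note ex = exch[of SA S1 S2, OF _ _ _ h1 h2 PS1 h5 m0 h6 h3 h4]
    show False using noimp[of "(SA - S1) \<union> S2"] ex PA by simp
  qed
  show "AE \<omega> in M. cc < zf (X \<omega>) \<longrightarrow> X \<omega> \<in> SA"
  proof -
    have "AE \<omega> in M. \<not> (cc < zf (X \<omega>) \<and> X \<omega> \<notin> SA)"
      by (rule AE_null_pred) (use P1 PX_set[of "\<lambda>x. cc < zf x \<and> x \<notin> SA"] in \<open>auto simp: SH_def set_diff_eq\<close>)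
    then show ?thesis by (auto elim!: eventually_mono)
  qed
  have P2: "PX (SA \<inter> SL) = 0"
  proof (rule ccontr)
    assume "PX (SA \<inter> SL) \<noteq> 0"
    then have pos: "0 < PX (SA \<inter> SL)" using measure_nonneg[of M] by (simp add: less_le)
    show False
    proof (cases "cc = 0")
      case True
      have SL: "SL = {x. x < q}" using True by (auto simp: SL_def zf_neg_iff)
      have SH: "SH = {x. q < x}" using True by (auto simp: SH_def zf_pos_iff)
      have seq: "{x. zf x \<le> cc} = {x. x < q} \<union> {q}"
      proof (intro equalityI subsetI)
        fix x assume "x \<in> {x. zf x \<le> cc}"
        then have "\<not> 0 < zf x" using True by simp
        then have "\<not> q < x" using zf_pos_iff[of x] by blast
        then show "x \<in> {x. x < q} \<union> {q}" by auto
      next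
        fix x assume "x \<in> {x. x < q} \<union> {q}"
        then have "x < q \<or> x = q" by auto
        then show "x \<in> {x. zf x \<le> cc}"
        proof
          assume "x < q" then have "zf x < 0" using zf_neg_iff by blast
          then show ?thesis using True by simp
        next
          assume "x = q" then show ?thesis using True zf_q by simp
        qed
      qed
      have "PX {x. zf x \<le> cc} = PX ({x. x < q} \<union> {q})" by (simp only: seq)
      also have "\<dots> = PX {x. x < q} + PX {q}" by (rule PX_Un) auto
      also have "PX {q} = 0" using Xatl[of q] PX_set[of "\<lambda>x. x = q"] by simp
      also have "PX {x. x < q} \<le> p" using PX_less_q PX_set[of "\<lambda>x. x < q"] by simp
      finally have "1 - p \<le> PX SH" using PSH by simp
      moreover have "PX (SA \<inter> SH) = PX SH"
        using PX_Diff2[of SH SA] P1 by simp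
      moreover have "PX (SA \<inter> SH) + PX (SA \<inter> SL) \<le> PX SA"
      proof -
        have u: "PX ((SA \<inter> SH) \<union> (SA \<inter> SL)) = PX (SA \<inter> SH) + PX (SA \<inter> SL)"
          by (rule PX_Un) (auto simp: SH_def SL_def)
        have v: "PX ((SA \<inter> SH) \<union> (SA \<inter> SL)) \<le> PX SA" by (rule PX_mono) auto
        show ?thesis using u v by linarith
      qed
      ultimately show False using pos PA by simp
    next
      case False
      then have cpos: "0 < cc" using c0 by simp
      have "\<exists>n. 0 < PX (SA \<inter> {x. zf x < cc - inverse (real (Suc n))})"
      proof (rule pos_union[OF _ _ pos])
        show "(\<Union>n. SA \<inter> {x. zf x < cc - inverse (real (Suc n))}) = SA \<inter> SL"
        proof
          show "(\<Union>n. SA \<inter> {x. zf x < cc - inverse (real (Suc n))}) \<subseteq> SA \<inter> SL"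
          proof
            fix x assume "x \<in> (\<Union>n. SA \<inter> {x. zf x < cc - inverse (real (Suc n))})"
            then obtain n where h: "zf x < cc - inverse (real (Suc n))" "x \<in> SA" by auto
            have i: "0 < inverse (real (Suc n))" by simp
            have "zf x < cc" using h(1) i by linarith
            then show "x \<in> SA \<inter> SL" using h(2) by (simp add: SL_def)
          qed
          show "SA \<inter> SL \<subseteq> (\<Union>n. SA \<inter> {x. zf x < cc - inverse (real (Suc n))})"
          proof
            fix x assume x: "x \<in> SA \<inter> SL"
            then obtain n where "inverse (real (Suc n)) < cc - zf x" using reals_Archimedean[of "cc - zf x"] by (auto simp: SL_def)
            then have "zf x < cc - inverse (real (Suc n))" by linarith
            then show "x \<in> (\<Union>n. SA \<inter> {x. zf x < cc - inverse (real (Suc n))})" using x by blast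
          qed
        qed
      qed measurable
      then obtain n where posn: "0 < PX (SA \<inter> {x. zf x < cc - inverse (real (Suc n))})" by auto
      define \<delta> where "\<delta> = inverse (real (Suc n))"
      have \<delta>: "0 < \<delta>" by (simp add: \<delta>_def)
      define S1 where "S1 = SA \<inter> {x. zf x < cc - \<delta>}"
      have [measurable]: "S1 \<in> sets borel" unfolding S1_def by measurable
      define m where "m = PX S1"
      have m0: "0 < m" using posn by (simp add: m_def S1_def \<delta>_def)
      define S2f where "S2f = {x. cc \<le> zf x} - SA"
      have [measurable]: "S2f \<in> sets borel" unfolding S2f_def by measurable
      have "PX {x. cc \<le> zf x} = 1 - PX SL"
        using PX_Diff[of UNIV SL] PX_UNIV by (simp add: SL_def set_diff_eq not_less)
      moreover have "PX S2f = PX {x. cc \<le> zf x} - PX (SA \<inter> {x. cc \<le> zf x})"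
        unfolding S2f_def by (rule PX_Diff2) auto
      moreover have "PX SA = PX (SA \<inter> {x. cc \<le> zf x}) + PX (SA \<inter> SL)"
      proof -
        have "SA = (SA \<inter> {x. cc \<le> zf x}) \<union> (SA \<inter> SL)" by (auto simp: SL_def)
        then have "PX SA = PX ((SA \<inter> {x. cc \<le> zf x}) \<union> (SA \<inter> SL))" by simp
        also have "\<dots> = PX (SA \<inter> {x. cc \<le> zf x}) + PX (SA \<inter> SL)" by (rule PX_Un) (auto simp: SL_def)
        finally show ?thesis .
      qed
      moreover have "m \<le> PX (SA \<inter> SL)" unfolding m_def S1_def using \<delta> by (intro PX_mono) (auto simp: SL_def)
      ultimately have mle: "m \<le> PX S2f" using PSL PA by simp
      obtain S2 where [measurable]: "S2 \<in> sets borel" and S2sub: "S2 \<subseteq> S2f" and PS2: "PX S2 = m"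
        using cut[of S2f m] mle m0 by auto
      have h1: "S1 \<subseteq> SA" by (auto simp: S1_def)
      have h2: "S2 \<inter> SA = {}" using S2sub by (auto simp: S2f_def)
      have h3: "\<And>x. x \<in> S1 \<Longrightarrow> 0 \<le> x \<Longrightarrow> Wf x \<le> max (cc - \<delta>) 0"
        by (auto simp: S1_def Wf_max)
      have h4: "\<And>x. x \<in> S2 \<Longrightarrow> 0 \<le> x \<Longrightarrow> cc \<le> Wf x"
        using S2sub by (auto simp: S2f_def Wf_max)
      have h5: "PX S1 = m" by (simp add: m_def)
      have h6: "max (cc - \<delta>) 0 < cc" using \<delta> cpos by simp
      note ex = exch[of SA S1 S2, OF _ _ _ h1 h2 h5 PS2 m0 h6 h3 h4]
      show False using noimp[of "(SA - S1) \<union> S2"] ex PA by simp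
    qed
  qed
  show "AE \<omega> in M. X \<omega> \<in> SA \<longrightarrow> cc \<le> zf (X \<omega>)"
  proof -
    have "AE \<omega> in M. \<not> (X \<omega> \<in> SA \<and> zf (X \<omega>) < cc)"
      by (rule AE_null_pred) (use P2 PX_set[of "\<lambda>x. x \<in> SA \<and> zf x < cc"] in \<open>auto simp: SL_def Int_def\<close>)
    then show ?thesis by (auto elim!: eventually_mono)
  qed
qed

end

definition kf :: "real set \<Rightarrow> real \<Rightarrow> real" where
  "kf S x = (if x \<in> S then pi else 0) + arctan x"

context L2
begin

abbreviation "RX \<equiv> restrX M X"

lemma RX_space[simp]: "space RX = space M"
  unfolding restrX_def by (simp add: space_restr_to_subalg)

lemma RX_sets: "sets RX = sets (sigmaX M X)"
  unfolding restrX_def by (rule sets_restr_to_subalg[OF subalg])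

lemma RX_prob: "prob_space RX"
  unfolding restrX_def by (rule prob_space_restr_to_subalg[OF subalg prob_space_axioms])

lemma RX_measure: "A \<in> sets RX \<Longrightarrow> measure RX A = measure M A"
  unfolding restrX_def measure_def
  using emeasure_restr_to_subalg[OF subalg] RX_sets by (simp add: restrX_def)

lemma X_sigmaX: "X \<in> borel_measurable (sigmaX M X)"
  unfolding sigmaX_def by (rule measurable_vimage_algebra1) auto

lemma X_RX[measurable]: "X \<in> borel_measurable RX"
  unfolding restrX_def by (rule measurable_in_subalg[OF subalg X_sigmaX])

lemma RX_to_M: "f \<in> borel_measurable RX \<Longrightarrow> f \<in> borel_measurable M"
  unfolding restrX_def by (metis measurable_from_subalg[OF subalg] measurable_in_subalg'[OF subalg])

lemma VaR_RX:
  assumes [measurable]: "Y \<in> borel_measurable RX"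
  shows "VaR RX t Y = VaR M t Y"
proof -
  have "measure RX {\<omega>\<in>space RX. Y \<omega> \<le> x} = measure M {\<omega>\<in>space M. Y \<omega> \<le> x}" for x
  proof -
    have "{\<omega>\<in>space RX. Y \<omega> \<le> x} \<in> sets RX" by measurable
    from RX_measure[OF this] show ?thesis by simp
  qed
  then show ?thesis unfolding VaR_def by simp
qed

lemma AE_RX_M: "AE \<omega> in RX. P \<omega> \<Longrightarrow> AE \<omega> in M. P \<omega>"
  unfolding restrX_def by (rule AE_restr_to_subalg[OF subalg])

lemma AE_M_RX:
  assumes "AE \<omega> in M. P \<omega>" and "Measurable.pred RX P"
  shows "AE \<omega> in RX. P \<omega>"
  using assms unfolding restrX_def
  by (intro AE_restr_to_subalg2[OF subalg]) (auto intro: measurable_in_subalg'[OF subalg])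

lemma kf_meas[measurable]:
  assumes [measurable]: "S \<in> sets borel" shows "kf S \<in> borel_measurable borel"
  unfolding kf_def by measurable

lemma kf_eq: "kf S x = k \<Longrightarrow> x = tan k \<or> x = tan (k - pi)"
  unfolding kf_def by (auto split: if_splits simp: tan_arctan)

lemma kf_gt: "x \<in> S \<longleftrightarrow> pi / 2 < kf S x"
  using arctan_lbound[of x] arctan_ubound[of x] by (auto simp: kf_def)

lemma ucon:
  assumes [measurable]: "SA \<in> sets borel" and PA: "PX SA = 1 - p"
    and up: "AE \<omega> in M. cc < zf (X \<omega>) \<longrightarrow> X \<omega> \<in> SA"
    and down: "AE \<omega> in M. X \<omega> \<in> SA \<longrightarrow> cc \<le> zf (X \<omega>)"
  shows "\<exists>U. uniform_transform RX (\<lambda>\<omega>. zf (X \<omega>)) U \<and> (AE \<omega> in M. X \<omega> \<in> SA \<longleftrightarrow> p < U \<omega>)"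
proof -
  interpret R: prob_space RX by (rule RX_prob)
  define Zr where "Zr = (\<lambda>\<omega>. zf (X \<omega>))"
  define Kr where "Kr = (\<lambda>\<omega>. kf SA (X \<omega>))"
  have Zrm[measurable]: "Zr \<in> borel_measurable RX" and Krm[measurable]: "Kr \<in> borel_measurable RX"
    unfolding Zr_def Kr_def by measurable
  have atl: "measure RX {\<omega>\<in>space RX. Kr \<omega> = k} = 0" for k
  proof -
    have "measure RX {\<omega>\<in>space RX. Kr \<omega> = k} = measure M {\<omega>\<in>space M. kf SA (X \<omega>) = k}"
    proof -
      have "{\<omega>\<in>space RX. Kr \<omega> = k} \<in> sets RX" by measurable
      from RX_measure[OF this] show ?thesis by (simp add: Kr_def)
    qed
    also have "\<dots> \<le> measure M ({\<omega>\<in>space M. X \<omega> = tan k} \<union> {\<omega>\<in>space M. X \<omega> = tan (k - pi)})"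
      using kf_eq by (intro finite_measure_mono) auto
    also have "\<dots> \<le> measure M {\<omega>\<in>space M. X \<omega> = tan k} + measure M {\<omega>\<in>space M. X \<omega> = tan (k - pi)}"
      by (rule measure_Un_le) auto
    also have "\<dots> = 0" using Xatl by simp
    finally show ?thesis using measure_nonneg[of RX] by (meson order.antisym)
  qed
  define h where "h x = measure RX {\<omega>'\<in>space RX. zf (X \<omega>') < zf x \<or> (zf (X \<omega>') = zf x \<and> kf SA (X \<omega>') \<le> kf SA x)}" for x
  have hU: "lexU RX Zr Kr = (\<lambda>\<omega>. h (X \<omega>))" unfolding lexU_def h_def Zr_def Kr_def by auto
  have h_meas[measurable]: "h \<in> borel_measurable borel"
  proof -
    define Q where "Q = {xw \<in> space (borel \<Otimes>\<^sub>M RX). zf (X (snd xw)) < zf (fst xw) \<or> (zf (X (snd xw)) = zf (fst xw) \<and> kf SA (X (snd xw)) \<le> kf SA (fst xw))}"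
    have Qm: "Q \<in> sets (borel \<Otimes>\<^sub>M RX)" unfolding Q_def by measurable
    have "(\<lambda>x. emeasure RX (Pair x -` Q)) \<in> borel_measurable borel" by (rule R.measurable_emeasure_Pair[OF Qm])
    then have "(\<lambda>x. enn2real (emeasure RX (Pair x -` Q))) \<in> borel_measurable borel" by measurable
    moreover have "Pair x -` Q = {\<omega>'\<in>space RX. zf (X \<omega>') < zf x \<or> (zf (X \<omega>') = zf x \<and> kf SA (X \<omega>') \<le> kf SA x)}" for x
      by (auto simp: Q_def space_pair_measure)
    ultimately show ?thesis unfolding h_def measure_def by simp
  qed
  define U where "U = lexU RX Zr Kr"
  have Um[measurable]: "U \<in> borel_measurable RX" unfolding U_def hU by measurable
  have Um': "lexU RX Zr Kr \<in> borel_measurable RX" using Um by (simp add: U_def)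
  have ex: "measure RX {\<omega>\<in>space RX. U \<omega> \<le> t} = (t - 0) / (1 - 0)" if t: "0 \<le> t" "t \<le> 1" for t
  proof (cases "t < 1")
    case True
    then show ?thesis using R.U_exact[OF Zrm Krm Um' atl t(1)] by (simp add: U_def)
  next
    case False
    then have "t = 1" using t by simp
    moreover have "{\<omega>\<in>space RX. U \<omega> \<le> 1} = space RX"
      by (auto simp: U_def lexU_def intro: R.prob_le_1)
    moreover have "measure RX (space M) = 1" using R.prob_space by simp
    ultimately show ?thesis by simp
  qed
  have dist: "distributed RX lborel U (\<lambda>x. indicator {0..1} x / Henstock_Kurzweil_Integration.content {0..1::real})"
    by (rule R.uniform_distrI_borel_atLeastAtMost[OF Um _ ex]) auto
  have D: "distr RX lborel U = uniform_measure lborel {0..1}"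
  proof -
    have f: "(\<lambda>x. ennreal (indicator {0..1} x)) = (\<lambda>x::real. indicator {0..1} x / (1::ennreal))"
      by (auto simp: indicator_def fun_eq_iff)
    show ?thesis using distributed_distr_eq_density[OF dist] by (simp add: uniform_measure_def f)
  qed
  have V: "AE \<omega> in RX. VaR RX (U \<omega>) Zr = Zr \<omega>"
    using R.U_VaR[OF Zrm Krm Um' atl] by (simp add: U_def)
  define A where "A = X -` SA \<inter> space M"
  have Am[measurable]: "A \<in> sets RX" unfolding A_def RX_sets by (rule sigmaX_in) simp
  have PAR: "prob_space.prob RX A = 1 - p" using RX_measure[OF Am] PA by (simp add: A_def)
  have c: "cc = VaR RX p Zr" using VaR_RX[OF Zrm] by (simp add: Zr_def)
  have upR: "AE \<omega> in RX. cc < Zr \<omega> \<longrightarrow> \<omega> \<in> A"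
  proof (rule AE_M_RX)
    show "AE \<omega> in M. cc < Zr \<omega> \<longrightarrow> \<omega> \<in> A"
      using up by (auto simp: Zr_def A_def elim!: eventually_mono intro: AE_space[THEN eventually_mono])
    show "Measurable.pred RX (\<lambda>\<omega>. cc < Zr \<omega> \<longrightarrow> \<omega> \<in> A)" by measurable
  qed
  have downR: "AE \<omega> in RX. \<omega> \<in> A \<longrightarrow> cc \<le> Zr \<omega>"
  proof (rule AE_M_RX)
    show "AE \<omega> in M. \<omega> \<in> A \<longrightarrow> cc \<le> Zr \<omega>"
      using down by (auto simp: Zr_def A_def elim!: eventually_mono)
    show "Measurable.pred RX (\<lambda>\<omega>. \<omega> \<in> A \<longrightarrow> cc \<le> Zr \<omega>)" by measurable
  qed
  have KA: "\<forall>\<omega>\<in>space RX. (\<omega> \<in> A \<longleftrightarrow> pi / 2 < Kr \<omega>)"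
    using kf_gt by (auto simp: A_def Kr_def)
  have "AE \<omega> in RX. (\<omega> \<in> A \<longleftrightarrow> p < lexU RX Zr Kr \<omega>)"
    by (rule R.U_A[OF Zrm Krm Um' atl p0 p1 c Am PAR upR downR KA])
  then have "AE \<omega> in M. (\<omega> \<in> A \<longleftrightarrow> p < U \<omega>)" unfolding U_def by (rule AE_RX_M)
  then have AU: "AE \<omega> in M. (X \<omega> \<in> SA \<longleftrightarrow> p < U \<omega>)"
    using AE_space by eventually_elim (auto simp: A_def)
  have "uniform_transform RX (\<lambda>\<omega>. zf (X \<omega>)) U"
    unfolding uniform_transform_def using Um D V by (simp add: Zr_def)
  with AU show ?thesis by blast
qed

end

context L2
begin

lemma bwd:
  assumes [measurable]: "SA \<in> sets borel" and PA: "PX SA = 1 - p"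
    and ut: "uniform_transform RX (\<lambda>\<omega>. zf (X \<omega>)) U"
    and AU: "AE \<omega> in M. (\<omega> \<in> X -` SA \<inter> space M \<longleftrightarrow> p < U \<omega>)"
  shows "\<forall>B\<in>sets (sigmaX M X). prob B = 1 - p \<longrightarrow> objA M X \<gamma> q B \<le> objA M X \<gamma> q (X -` SA \<inter> space M)"
proof (intro ballI impI)
  interpret R: prob_space RX by (rule RX_prob)
  from ut have Um[measurable]: "U \<in> borel_measurable RX" and D: "distr RX lborel U = uniform_measure lborel {0..1}"
    and V: "AE \<omega> in RX. VaR RX (U \<omega>) (\<lambda>\<omega>. zf (X \<omega>)) = zf (X \<omega>)"
    by (auto simp: uniform_transform_def)
  have Zr[measurable]: "(\<lambda>\<omega>. zf (X \<omega>)) \<in> borel_measurable RX" by measurable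
  have e: "emeasure RX {\<omega>\<in>space RX. U \<omega> \<in> T} = 0" if T: "T \<in> sets borel" "T \<inter> {0..1} \<subseteq> {0, 1}" for T
  proof -
    have "emeasure RX {\<omega>\<in>space RX. U \<omega> \<in> T} = emeasure (distr RX lborel U) T"
      using T by (subst emeasure_distr) (auto intro!: arg_cong[where f="emeasure RX"])
    also have "\<dots> = emeasure (uniform_measure lborel {0..1}) T" by (simp add: D)
    also have "\<dots> = emeasure lborel ({0..1} \<inter> T) / emeasure lborel {0..1::real}"
      using T by (intro emeasure_uniform_measure) auto
    also have "emeasure lborel ({0..1} \<inter> T) \<le> emeasure lborel {0, 1::real}"
      using T by (intro emeasure_mono) auto
    then have "emeasure lborel ({0..1} \<inter> T) = 0"
      by (simp add: emeasure_lborel_countable)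
    finally show ?thesis by simp
  qed
  have "AE \<omega> in RX. \<not> U \<omega> \<in> {..0} \<union> {1..}"
  proof -
    have e2: "emeasure RX {\<omega>\<in>space RX. U \<omega> \<in> {..0} \<union> {1..}} = 0" by (rule e) auto
    have m: "{\<omega>\<in>space RX. U \<omega> \<in> {..0} \<union> {1..}} \<in> sets RX" by measurable
    show ?thesis using AE_iff_measurable[OF m, of "\<lambda>\<omega>. \<not> U \<omega> \<in> {..0} \<union> {1..}"] e2 by simp
  qed
  with V have "AE \<omega> in RX. 0 < U \<omega> \<and> U \<omega> < 1 \<and> VaR RX (U \<omega>) (\<lambda>\<omega>. zf (X \<omega>)) = zf (X \<omega>)"
    by eventually_elim auto
  then have "AE \<omega> in M. 0 < U \<omega> \<and> U \<omega> < 1 \<and> VaR RX (U \<omega>) (\<lambda>\<omega>. zf (X \<omega>)) = zf (X \<omega>)"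
    by (rule AE_RX_M)
  then have W: "AE \<omega> in M. (X \<omega> \<in> SA \<longrightarrow> cc \<le> zf (X \<omega>)) \<and> (X \<omega> \<notin> SA \<longrightarrow> zf (X \<omega>) \<le> cc)"
    using AU AE_space
  proof eventually_elim
    case (elim \<omega>)
    then have U: "0 < U \<omega>" "U \<omega> < 1" and Vq: "VaR M (U \<omega>) (\<lambda>\<omega>. zf (X \<omega>)) = zf (X \<omega>)"
      and iff: "X \<omega> \<in> SA \<longleftrightarrow> p < U \<omega>"
      using VaR_RX[OF Zr] by auto
    show ?case
    proof (intro conjI impI)
      assume "X \<omega> \<in> SA"
      then have "p \<le> U \<omega>" using iff by simp
      then show "cc \<le> zf (X \<omega>)" using VaR_mono[OF Zm p0 _ U(2)] Vq by simp
    next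
      assume "X \<omega> \<notin> SA"
      then have "U \<omega> \<le> p" using iff by simp
      then show "zf (X \<omega>) \<le> cc" using VaR_mono[OF Zm U(1) _ p1] Vq by simp
    qed
  qed
  fix B assume "B \<in> sets (sigmaX M X)" and PB: "prob B = 1 - p"
  then obtain SB where SB[measurable]: "SB \<in> sets borel" and Beq: "B = X -` SB \<inter> space M"
    using sigmaX_sets by auto
  define cp where "cp = max cc 0"
  let ?IA = "\<lambda>\<omega>. indicator SA (X \<omega>) * Wf (X \<omega>)"
  let ?IB = "\<lambda>\<omega>. indicator SB (X \<omega>) * Wf (X \<omega>)"
  have "integral\<^sup>L M ?IB \<le> integral\<^sup>L M (\<lambda>\<omega>. ?IA \<omega> + (cp * indicator SB (X \<omega>) - cp * indicator SA (X \<omega>)))"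
  proof (rule integral_mono_AE)
    show "integrable M ?IB" by (rule int_W) simp
    show "integrable M (\<lambda>\<omega>. ?IA \<omega> + (cp * indicator SB (X \<omega>) - cp * indicator SA (X \<omega>)))"
      using int_W[of SA] int_ind_int[of SA] int_ind_int[of SB] by auto
    show "AE \<omega> in M. ?IB \<omega> \<le> ?IA \<omega> + (cp * indicator SB (X \<omega>) - cp * indicator SA (X \<omega>))"
      using W
    proof eventually_elim
      case (elim \<omega>)
      then show ?case by (auto simp: indicator_def cp_def Wf_max)
    qed
  qed
  also have "\<dots> = integral\<^sup>L M ?IA + (cp * PX SB - cp * PX SA)"
    using int_W[of SA] int_ind_int[of SA] int_ind_int[of SB] int_ind[of SA] int_ind[of SB] by simp
  also have "\<dots> = integral\<^sup>L M ?IA" using PA PB Beq by simp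
  finally have "integral\<^sup>L M ?IB \<le> integral\<^sup>L M ?IA" .
  then show "objA M X \<gamma> q B \<le> objA M X \<gamma> q (X -` SA \<inter> space M)"
    unfolding Beq using objA_dec[of SA] objA_dec[of SB] by simp
qed

end

theorem lemma2:
  fixes M :: "'a measure" and X :: "'a \<Rightarrow> real" and \<gamma> :: "real \<Rightarrow> real"
    and p x0 q :: real and gX :: "real \<Rightarrow> real"
  assumes P: "prob_space M" and atl: "atomless M"
    and p: "0 < p" "p < 1"
    and Xm: "X \<in> borel_measurable M"
    and Xnn: "\<forall>\<omega>\<in>space M. 0 \<le> X \<omega>"
    and dens: "\<exists>f. distributed M lborel X (\<lambda>x. ennreal (f x)) \<and> (\<forall>x. 0 \<le> f x)
                   \<and> (\<forall>x\<in>dist_support M X. 0 < f x)"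
    and gcont: "continuous_on UNIV \<gamma>" and gpos: "\<forall>x. 0 < \<gamma> x"
    and gint: "integrable M (\<lambda>\<omega>. \<gamma> (X \<omega>))"
    and gE: "integral\<^sup>L M (\<lambda>\<omega>. \<gamma> (X \<omega>)) = 1"
    and gXint: "integrable M (\<lambda>\<omega>. \<gamma> (X \<omega>) * X \<omega>)"
    and x0: "0 \<le> x0" "x0 < integral\<^sup>L M (\<lambda>\<omega>. \<gamma> (X \<omega>) * X \<omega>)"
    and q_def: "q = Inf ((\<lambda>g. VaR M p (\<lambda>\<omega>. g (X \<omega>))) ` Gns M X \<gamma> x0)"
    and gXsol: "gX \<in> Gns M X \<gamma> x0" "VaR M p (\<lambda>\<omega>. gX (X \<omega>)) = q"
    and qpos: "q > 0"
  shows
    "integral\<^sup>L M (\<lambda>\<omega>. \<gamma> (X \<omega>) * gX (X \<omega>)) = x0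
     \<and> (\<forall>g A. g \<in> Gns M X \<gamma> x0 \<longrightarrow> A \<in> sets M \<longrightarrow> measure M A = 1 - p \<longrightarrow>
        (AE \<omega> in M. g (X \<omega>) = (if \<omega> \<in> A then X \<omega> else min (X \<omega>) q)) \<longrightarrow>
        VaR M p (\<lambda>\<omega>. g (X \<omega>)) = q)
     \<and> (\<exists>A\<in>sets (sigmaX M X). measure M A = 1 - p \<and>
        (AE \<omega> in M. gX (X \<omega>) = (if \<omega> \<in> A then X \<omega> else min (X \<omega>) q)))
     \<and> (\<forall>A. A \<in> sets (sigmaX M X) \<longrightarrow> measure M A = 1 - p \<longrightarrow>
        ((\<forall>B\<in>sets (sigmaX M X). measure M B = 1 - p \<longrightarrow> objA M X \<gamma> q B \<le> objA M X \<gamma> q A)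
         \<longleftrightarrow> (\<exists>U. uniform_transform (restrX M X) (\<lambda>\<omega>. (X \<omega> - q) * \<gamma> (X \<omega>)) U \<and>
                  (AE \<omega> in M. (\<omega> \<in> A \<longleftrightarrow> p < U \<omega>)))))
     \<and> (\<exists>U. uniform_transform (restrX M X) (\<lambda>\<omega>. (X \<omega> - q) * \<gamma> (X \<omega>)) U \<and>
        (AE \<omega> in M. gX (X \<omega>) = (if p < U \<omega> then X \<omega> else min (X \<omega>) q)))"
proof -
  interpret prob_space M by (rule P)
  obtain f where dist: "distributed M lborel X (\<lambda>x. ennreal (f x))" using dens by auto
  have Xatl: "measure M {\<omega>\<in>space M. X \<omega> = x} = 0" for x
  proof -
    have "emeasure M (X -` {x} \<inter> space M) = (\<integral>\<^sup>+y. ennreal (f y) * indicator {x} y \<partial>lborel)"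
      by (rule distributed_emeasure[OF dist]) simp
    also have "\<dots> = (\<integral>\<^sup>+y. ennreal (f x) * indicator {x} y \<partial>lborel)"
      by (intro nn_integral_cong) (auto split: split_indicator)
    also have "\<dots> = ennreal (f x) * emeasure lborel {x}"
      by (rule nn_integral_cmult_indicator) simp
    also have "\<dots> = 0" by simp
    finally have "emeasure M (X -` {x} \<inter> space M) = 0" .
    moreover have "X -` {x} \<inter> space M = {\<omega>\<in>space M. X \<omega> = x}" by auto
    ultimately show ?thesis by (simp add: measure_def)
  qed
  interpret L: L2 M X \<gamma> p x0 q gX
    by unfold_locales (use p Xm Xnn Xatl gcont gpos gint gE gXint x0 q_def gXsol qpos in auto)
  have Zeq: "(\<lambda>\<omega>. (X \<omega> - q) * \<gamma> (X \<omega>)) = (\<lambda>\<omega>. L.zf (X \<omega>))" by (simp add: L.zf_def)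
  have c1: "integral\<^sup>L M (\<lambda>\<omega>. \<gamma> (X \<omega>) * gX (X \<omega>)) = x0" by (rule L.part_i)
  have c2: "\<forall>g A. g \<in> Gns M X \<gamma> x0 \<longrightarrow> A \<in> sets M \<longrightarrow> measure M A = 1 - p \<longrightarrow>
        (AE \<omega> in M. g (X \<omega>) = (if \<omega> \<in> A then X \<omega> else min (X \<omega>) q)) \<longrightarrow>
        VaR M p (\<lambda>\<omega>. g (X \<omega>)) = q"
    using L.part_ii L.Gns_D(1) by blast
  obtain SA where SA[measurable]: "SA \<in> sets borel" and PA: "L.PX SA = 1 - p"
    and eqA: "AE \<omega> in M. gX (X \<omega>) = L.gS SA (X \<omega>)"
    using L.part_iii by auto
  have c3: "\<exists>A\<in>sets (sigmaX M X). measure M A = 1 - p \<and>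
        (AE \<omega> in M. gX (X \<omega>) = (if \<omega> \<in> A then X \<omega> else min (X \<omega>) q))"
  proof (intro bexI conjI)
    show "X -` SA \<inter> space M \<in> sets (sigmaX M X)" by (rule L.sigmaX_in) simp
    show "measure M (X -` SA \<inter> space M) = 1 - p" by (rule PA)
    show "AE \<omega> in M. gX (X \<omega>) = (if \<omega> \<in> X -` SA \<inter> space M then X \<omega> else min (X \<omega>) q)"
      using eqA AE_space by eventually_elim (auto simp: L.gS_def)
  qed
  have c4: "\<forall>A. A \<in> sets (sigmaX M X) \<longrightarrow> measure M A = 1 - p \<longrightarrow>
        ((\<forall>B\<in>sets (sigmaX M X). measure M B = 1 - p \<longrightarrow> objA M X \<gamma> q B \<le> objA M X \<gamma> q A)
         \<longleftrightarrow> (\<exists>U. uniform_transform (restrX M X) (\<lambda>\<omega>. (X \<omega> - q) * \<gamma> (X \<omega>)) U \<and>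
                  (AE \<omega> in M. (\<omega> \<in> A \<longleftrightarrow> p < U \<omega>))))"
  proof (intro allI impI)
    fix A assume "A \<in> sets (sigmaX M X)" and PA': "measure M A = 1 - p"
    then obtain SB where SB[measurable]: "SB \<in> sets borel" and Aeq: "A = X -` SB \<inter> space M"
      using L.sigmaX_sets by auto
    have PB: "L.PX SB = 1 - p" using PA' Aeq by simp
    show "(\<forall>B\<in>sets (sigmaX M X). measure M B = 1 - p \<longrightarrow> objA M X \<gamma> q B \<le> objA M X \<gamma> q A)
         \<longleftrightarrow> (\<exists>U. uniform_transform (restrX M X) (\<lambda>\<omega>. (X \<omega> - q) * \<gamma> (X \<omega>)) U \<and>
                  (AE \<omega> in M. (\<omega> \<in> A \<longleftrightarrow> p < U \<omega>)))"
    proof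
      assume opt: "\<forall>B\<in>sets (sigmaX M X). measure M B = 1 - p \<longrightarrow> objA M X \<gamma> q B \<le> objA M X \<gamma> q A"
      have opt': "\<forall>B\<in>sets (sigmaX M X). prob B = 1 - p \<longrightarrow> objA M X \<gamma> q B \<le> objA M X \<gamma> q (X -` SB \<inter> space M)"
        using opt Aeq by simp
      obtain U where ut: "uniform_transform L.RX (\<lambda>\<omega>. L.zf (X \<omega>)) U"
        and AU: "AE \<omega> in M. X \<omega> \<in> SB \<longleftrightarrow> p < U \<omega>"
        using L.ucon[OF SB PB L.struct(1)[OF SB PB opt'] L.struct(2)[OF SB PB opt']] by auto
      have "AE \<omega> in M. (\<omega> \<in> A \<longleftrightarrow> p < U \<omega>)"
        using AU AE_space by eventually_elim (auto simp: Aeq)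
      then show "\<exists>U. uniform_transform (restrX M X) (\<lambda>\<omega>. (X \<omega> - q) * \<gamma> (X \<omega>)) U \<and>
                  (AE \<omega> in M. (\<omega> \<in> A \<longleftrightarrow> p < U \<omega>))"
        using ut unfolding Zeq by blast
    next
      assume "\<exists>U. uniform_transform (restrX M X) (\<lambda>\<omega>. (X \<omega> - q) * \<gamma> (X \<omega>)) U \<and>
                  (AE \<omega> in M. (\<omega> \<in> A \<longleftrightarrow> p < U \<omega>))"
      then obtain U where ut: "uniform_transform L.RX (\<lambda>\<omega>. L.zf (X \<omega>)) U"
        and AU: "AE \<omega> in M. (\<omega> \<in> A \<longleftrightarrow> p < U \<omega>)" unfolding Zeq by auto
      from L.bwd[OF SB PB ut] AU Aeq
      show "\<forall>B\<in>sets (sigmaX M X). measure M B = 1 - p \<longrightarrow> objA M X \<gamma> q B \<le> objA M X \<gamma> q A"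
        by simp
    qed
  qed
  have c5: "\<exists>U. uniform_transform (restrX M X) (\<lambda>\<omega>. (X \<omega> - q) * \<gamma> (X \<omega>)) U \<and>
        (AE \<omega> in M. gX (X \<omega>) = (if p < U \<omega> then X \<omega> else min (X \<omega>) q))"
  proof -
    note opt = L.sol_opt[OF SA PA eqA]
    obtain U where ut: "uniform_transform L.RX (\<lambda>\<omega>. L.zf (X \<omega>)) U"
      and AU: "AE \<omega> in M. X \<omega> \<in> SA \<longleftrightarrow> p < U \<omega>"
      using L.ucon[OF SA PA L.struct(1)[OF SA PA opt] L.struct(2)[OF SA PA opt]] by auto
    have "AE \<omega> in M. gX (X \<omega>) = (if p < U \<omega> then X \<omega> else min (X \<omega>) q)"
      using AU eqA by eventually_elim (auto simp: L.gS_def)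
    then show ?thesis using ut unfolding Zeq by blast
  qed
  show ?thesis using c1 c2 c3 c4 c5 by blast
qed


end
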